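(* Let $\Omega$ be the stationary batch sojourn time, whose Laplace transform is $\mathbb{E}(e^{-s\Omega})=\sum_{n\ge0}\sum_{b\ge1}e^*_{n,b}(s)\mathbb{P}(N=n)\mathbb{P}(B=b)$ with $B$ the geometric batch size and $N$ independent of $B$ with $\mathbb{P}(N=0)=1-\frac{\rho}{1-q}$, $\mathbb{P}(N=n)=\left(1-\frac{\rho}{1-q}\right)\rho(\rho+q)^{n-1}$ ($n\ge1$). Then $$\mathbb{E}(\Omega)=\frac{1-\rho-q}{q(q+\rho)}\left(\frac{(1-q)^2(\rho+q)}{\rho+q-q^2}E^{(1)}(q)+\frac{q^3}{(1-q)(\rho+q-q^2)}-\omega\right),$$ where $$\omega=\rho^2\left(\frac{q}{(1-q-\rho)^2}\left(\frac{\rho}{\rho+q}\right)^{\frac{1-q-2\rho}{\rho}}\Omega_1(q)+\Omega_2(q)\right).$$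
   Context: Queueing model: an $M^{[X]}/M/1$ processor-sharing queue. Batches arrive according to a Poisson process with rate $\rho>0$; each job requires an exponential service with mean $1$; the unit server capacity is shared equally among all jobs present; all interarrival times, batch sizes and service requirements are independent. Batch sizes are geometric: $\mathbb{P}(B=b)=(1-q)q^{b-1}$, $b\ge1$, with $q\in(0,1)$ and $\rho+q<1$. For $n\ge0,b\ge1$, $\Omega_{n,b}$ is the sojourn time of a tagged batch (from its arrival to the departure of its last job) given $n$ jobs present at its arrival and batch size $b$, and $e^*_{n,b}(s)=\mathbb{E}(e^{-s\Omega_{n,b}})$. Define $E^{(1)}(v)=-\sum_{n\ge0}\sum_{b\ge1}\mathbb{E}(\Omega_{n,b})\,q^n v^b$ (so that $\sum_{n,b}e^*_{n,b}(s)q^nv^b=\frac{v}{(1-q)(1-v)}+sE^{(1)}(v)+o(s)$ as $s\to0$). Define, for $0<v<\rho+q$, $$\Omega_1(v)=\frac{v}{1-q+\rho}F_1\left(\tfrac{1-q+\rho}{\rho},\tfrac{1-q-\rho}{\rho},2,\tfrac{1-q+2\rho}{\rho};\tfrac{v}{q+\rho},v\right)-\frac{(1-v)^{\frac{q-1}{\rho}}}{(1-q)(q+\rho)}\,{}_2F_1\left(\tfrac{1-q}{\rho},\tfrac{1-q-\rho}{\rho},\tfrac{1-q+\rho}{\rho};\tfrac{v(1-q-\rho)}{(1-v)(q+\rho)}\right),$$ $$\Omega_2(v)=\frac{(1-q)(\rho+q)}{\rho^2}v^{\frac{\rho+q-1}{\rho}}(\rho+q-v)^{-\frac{2\rho+q-1}{\rho}}\int_0^v(1-\xi)\,\xi^{\frac{1-2\rho-q}{\rho}}(\rho+q-\xi)^{-\frac{1-q}{\rho}}E^{(1)}(\xi)\,d\xi,$$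 where ${}_2F_1(a,b,c;z)$ is the Gauss hypergeometric function and $F_1(\alpha,\beta,\beta',\gamma;x,y)=\sum_{m,n\ge0}\frac{(\alpha)_{m+n}(\beta)_m(\beta')_n}{(\gamma)_{m+n}m!\,n!}x^my^n$ is the Appell function of the first kind ($(a)_k$ the Pochhammer symbol). *)

theory Defs
  imports "HOL-Analysis.Analysis"
begin

definition hyp2F1 :: "real \<Rightarrow> real \<Rightarrow> real \<Rightarrow> real \<Rightarrow> real" where
  "hyp2F1 a b c z =
     (\<Sum>k. pochhammer a k * pochhammer b k / (pochhammer c k * fact k) * z ^ k)"

definition appellF1 :: "real \<Rightarrow> real \<Rightarrow> real \<Rightarrow> real \<Rightarrow> real \<Rightarrow> real \<Rightarrow> real" where
  "appellF1 \<alpha> \<beta> \<beta>' \<gamma> x y =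
     (\<Sum>\<^sub>\<infinity>(m, n)\<in>UNIV.
        pochhammer \<alpha> (m + n) * pochhammer \<beta> m * pochhammer \<beta>' n
          / (pochhammer \<gamma> (m + n) * fact m * fact n) * x ^ m * y ^ n)"

text \<open>State (n,b): n = number of jobs not belonging to the tagged batch, b = number of
  remaining jobs of the tagged batch.  Total event rate is rho + 1: batch arrivals at rate rho
  with geometric size k (prob (1-q) q^(k-1)), and service completions at total rate 1, which
  hit a non-tagged job w.p. n/(n+b) and a tagged job w.p. b/(n+b).  The sojourn time of the
  tagged batch is the hitting time of b = 0; its mean is the minimal nonnegative solution
  (least fixed point, in ennreal) of the first-step equations.\<close>
definition sojourn_step ::
  "real \<Rightarrow> real \<Rightarrow> (nat \<Rightarrow> nat \<Rightarrow> ennreal) \<Rightarrow> nat \<Rightarrow> nat \<Rightarrow> ennreal" where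
  "sojourn_step \<rho> q h n b =
     (if b = 0 then 0 else
        ennreal (1 / (1 + \<rho>))
      + (\<Sum>k. ennreal (\<rho> / (1 + \<rho>) * ((1 - q) * q ^ k)) * h (n + Suc k) b)
      + ennreal (1 / (1 + \<rho>) * (real n / real (n + b))) * h (n - 1) b
      + ennreal (1 / (1 + \<rho>) * (real b / real (n + b))) * h n (b - 1))"

definition mean_sojourn_nb :: "real \<Rightarrow> real \<Rightarrow> nat \<Rightarrow> nat \<Rightarrow> real" where
  "mean_sojourn_nb \<rho> q n b = enn2real (lfp (sojourn_step \<rho> q) n b)"

definition E1 :: "real \<Rightarrow> real \<Rightarrow> real \<Rightarrow> real" where
  "E1 \<rho> q v = - (\<Sum>\<^sub>\<infinity>(n, b)\<in>UNIV \<times> {1..}. mean_sojourn_nb \<rho> q n b * q ^ n * v ^ b)"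

definition prob_B :: "real \<Rightarrow> nat \<Rightarrow> real" where
  "prob_B q b = (1 - q) * q ^ (b - 1)"

definition prob_N :: "real \<Rightarrow> real \<Rightarrow> nat \<Rightarrow> real" where
  "prob_N \<rho> q n = (if n = 0 then 1 - \<rho> / (1 - q)
                    else (1 - \<rho> / (1 - q)) * \<rho> * (\<rho> + q) ^ (n - 1))"

definition mean_sojourn :: "real \<Rightarrow> real \<Rightarrow> real" where
  "mean_sojourn \<rho> q =
     (\<Sum>\<^sub>\<infinity>(n, b)\<in>UNIV \<times> {1..}. mean_sojourn_nb \<rho> q n b * prob_N \<rho> q n * prob_B q b)"

definition Omega1 :: "real \<Rightarrow> real \<Rightarrow> real \<Rightarrow> real" where
  "Omega1 \<rho> q v =
     v / (1 - q + \<rho>) *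
       appellF1 ((1 - q + \<rho>) / \<rho>) ((1 - q - \<rho>) / \<rho>) 2 ((1 - q + 2 * \<rho>) / \<rho>)
                (v / (q + \<rho>)) v
   - (1 - v) powr ((q - 1) / \<rho>) / ((1 - q) * (q + \<rho>)) *
       hyp2F1 ((1 - q) / \<rho>) ((1 - q - \<rho>) / \<rho>) ((1 - q + \<rho>) / \<rho>)
              (v * (1 - q - \<rho>) / ((1 - v) * (q + \<rho>)))"

definition Omega2 :: "real \<Rightarrow> real \<Rightarrow> real \<Rightarrow> real" where
  "Omega2 \<rho> q v =
     (1 - q) * (\<rho> + q) / \<rho>^2 * v powr ((\<rho> + q - 1) / \<rho>)
       * (\<rho> + q - v) powr (- (2 * \<rho> + q - 1) / \<rho>)
       * integral {0..v} (\<lambda>\<xi>. (1 - \<xi>) * \<xi> powr ((1 - 2 * \<rho> - q) / \<rho>)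
                              * (\<rho> + q - \<xi>) powr (- (1 - q) / \<rho>) * E1 \<rho> q \<xi>)"

definition omega :: "real \<Rightarrow> real \<Rightarrow> real" where
  "omega \<rho> q =
     \<rho>^2 * (q / (1 - q - \<rho>)^2 * (\<rho> / (\<rho> + q)) powr ((1 - q - 2 * \<rho>) / \<rho>) * Omega1 \<rho> q q
            + Omega2 \<rho> q q)"

end

theory Submission
  imports Defs
begin

lemma sum_lin_geom:
  fixes x a b :: real
  assumes "0 \<le> x" "x < 1"
  shows "(\<lambda>k. (a + b * real k) * x ^ k) sums (a / (1 - x) + b * x / (1 - x)^2)"
proof -
  have g: "(\<lambda>k. x ^ k) sums (1 / (1 - x))" using assms by (intro geometric_sums) auto
  have d: "(\<lambda>k. real (Suc k) * x ^ k) sums (1 / (1 - x)^2)"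
    using geometric_deriv_sums[of x] assms by auto
  have "(\<lambda>k. (a - b) * x ^ k + b * (real (Suc k) * x ^ k)) sums ((a - b) * (1 / (1 - x)) + b * (1 / (1 - x)^2))"
    by (intro sums_add sums_mult g d)
  moreover have "(a - b) * (1 / (1 - x)) + b * (1 / (1 - x)^2) = a / (1 - x) + b * x / (1 - x)^2"
  proof -
    have "1 - x \<noteq> 0" using assms by auto
    then show ?thesis by (simp add: divide_simps) (simp add: algebra_simps power2_eq_square)
  qed
  ultimately show ?thesis by (simp add: algebra_simps)
qed

lemma summable_n2:
  fixes x :: real
  assumes "0 \<le> x" "x < 1"
  shows "summable (\<lambda>n. (real n + 1)^2 * x ^ n)"
proof -
  have s1: "\<And>y::real. norm y < 1 \<Longrightarrow> summable (\<lambda>n. real (Suc n) * y ^ n)"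
    using geometric_deriv_sums sums_summable by blast
  have "summable (\<lambda>n. diffs (\<lambda>n. real (Suc n)) n * x ^ n)"
    by (rule termdiff_converges[of x 1]) (use assms s1 in auto)
  then have "summable (\<lambda>n. (real n + 1) * (real n + 2) * x ^ n)"
    by (simp add: diffs_def algebra_simps)
  then show ?thesis
    by (rule summable_comparison_test'[where N=0])
       (use assms in \<open>auto simp: power2_eq_square intro!: mult_right_mono\<close>)
qed

lemma ennreal_plus4:
  "0 \<le> a \<Longrightarrow> 0 \<le> b \<Longrightarrow> 0 \<le> c \<Longrightarrow> 0 \<le> d \<Longrightarrow>
   ennreal a + ennreal b + ennreal c + ennreal d = ennreal (a + b + c + d)"
  by (simp add: ennreal_plus)

locale pq =
  fixes \<rho> q :: real
  assumes rho_pos: "0 < \<rho>" and q_pos: "0 < q" and q_lt1: "q < 1" and rq: "\<rho> + q < 1"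
begin

definition kap where "kap = (1 - q) / (1 - q - \<rho>)"

lemma kap_pos: "kap > 0" using rq q_lt1 by (simp add: kap_def)

lemma step_mono: "mono (sojourn_step \<rho> q)"
  unfolding mono_def le_fun_def sojourn_step_def
  by (auto intro!: add_mono mult_left_mono suminf_le)

definition fsup :: "nat \<Rightarrow> nat \<Rightarrow> ennreal" where
  "fsup n b = ennreal (kap * (real n + real b))"

lemma geo_lin: "(\<lambda>k. (1 - q) * q ^ k * (m + real k)) sums (m + q / (1 - q))"
proof -
  have "(\<lambda>k. (m + 1 * real k) * q ^ k) sums (m / (1 - q) + 1 * q / (1 - q)^2)"
    using sum_lin_geom[of q m 1] q_pos q_lt1 by auto
  then have "(\<lambda>k. (1 - q) * ((m + 1 * real k) * q ^ k)) sums ((1 - q) * (m / (1 - q) + 1 * q / (1 - q)^2))"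
    by (rule sums_mult)
  moreover have "(1 - q) * (m / (1 - q) + 1 * q / (1 - q)^2) = m + q / (1 - q)"
  proof -
    have "1 - q \<noteq> 0" using q_lt1 by auto
    then show ?thesis by (simp add: divide_simps) (simp add: algebra_simps power2_eq_square)
  qed
  ultimately show ?thesis by (simp add: algebra_simps)
qed

lemma super: "sojourn_step \<rho> q fsup \<le> fsup"
proof (intro le_funI)
  fix n b
  show "sojourn_step \<rho> q fsup n b \<le> fsup n b"
  proof (cases "b = 0")
    case True then show ?thesis by (simp add: sojourn_step_def)
  next
    case False
    let ?w = "\<lambda>k. \<rho> / (1 + \<rho>) * ((1 - q) * q ^ k)"
    have wk: "?w k \<ge> 0" for k using rho_pos q_pos q_lt1 by auto
    have sr: "(\<lambda>k. ?w k * (kap * (real (n + Suc k) + real b))) sums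
              (\<rho> / (1 + \<rho>) * kap * ((real n + 1 + real b) + q / (1 - q)))"
    proof -
      have "(\<lambda>k. \<rho> / (1 + \<rho>) * kap * ((1 - q) * q ^ k * ((real n + 1 + real b) + real k))) sums
              (\<rho> / (1 + \<rho>) * kap * ((real n + 1 + real b) + q / (1 - q)))"
        by (intro sums_mult geo_lin)
      then show ?thesis by (simp add: algebra_simps)
    qed
    have s1: "(\<Sum>k. ennreal (?w k) * fsup (n + Suc k) b) =
              ennreal (\<rho> / (1 + \<rho>) * kap * ((real n + 1 + real b) + q / (1 - q)))"
    proof -
      have "(\<Sum>k. ennreal (?w k) * fsup (n + Suc k) b) =
            (\<Sum>k. ennreal (?w k * (kap * (real (n + Suc k) + real b))))"
      proof (rule suminf_cong)
        fix k
        show "ennreal (?w k) * fsup (n + Suc k) b = ennreal (?w k * (kap * (real (n + Suc k) + real b)))"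
          using ennreal_mult[OF wk[of k], of "kap * (real (n + Suc k) + real b)"] kap_pos
          unfolding fsup_def by auto
      qed
      also have "\<dots> = ennreal (\<Sum>k. ?w k * (kap * (real (n + Suc k) + real b)))"
      proof (rule suminf_ennreal2)
        show "0 \<le> ?w k * (kap * (real (n + Suc k) + real b))" for k
          by (intro mult_nonneg_nonneg wk) (use kap_pos in auto)
      qed (use sr in \<open>auto simp: sums_iff\<close>)
      finally show ?thesis using sr by (simp add: sums_iff)
    qed
    have nb: "real n + real b > 0" using False by simp
    have e: "sojourn_step \<rho> q fsup n b =
       ennreal (1 / (1 + \<rho>)) + ennreal (\<rho> / (1 + \<rho>) * kap * ((real n + 1 + real b) + q / (1 - q)))
       + ennreal (1 / (1 + \<rho>) * (real n / real (n + b)) * (kap * (real (n - 1) + real b)))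
       + ennreal (1 / (1 + \<rho>) * (real b / real (n + b)) * (kap * (real n + real (b - 1))))"
      unfolding sojourn_step_def using False s1 rho_pos kap_pos
      by (simp add: fsup_def ennreal_mult[symmetric])
    also have "\<dots> = ennreal (1 / (1 + \<rho>) + \<rho> / (1 + \<rho>) * kap * ((real n + 1 + real b) + q / (1 - q))
       + 1 / (1 + \<rho>) * (real n / real (n + b)) * (kap * (real (n - 1) + real b))
       + 1 / (1 + \<rho>) * (real b / real (n + b)) * (kap * (real n + real (b - 1))))"
      by (rule ennreal_plus4) (use rho_pos kap_pos q_lt1 q_pos in auto)
    also have "\<dots> = fsup n b"
    proof -
      have a: "real n * real (n - 1) = real n * (real n - 1)" by (cases n) auto
      have bb: "real b * real (b - 1) = real b * (real b - 1)" using False by (cases b) auto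
      have c1: "real n / real (n + b) * (kap * (real (n - 1) + real b)) + real b / real (n + b) * (kap * (real n + real (b - 1)))
          = kap * (real n + real b - 1)"
      proof -
        have "real n / real (n + b) * (kap * (real (n - 1) + real b)) + real b / real (n + b) * (kap * (real n + real (b - 1)))
            = kap * (real n * real (n - 1) + real n * real b + real b * real n + real b * real (b - 1)) / (real n + real b)"
          by (simp add: add_divide_distrib[symmetric] algebra_simps)
        also have "\<dots> = kap * ((real n + real b) * (real n + real b - 1)) / (real n + real b)"
          by (simp only: a bb) (simp add: algebra_simps)
        also have "\<dots> = kap * (real n + real b - 1)" using nb by simp
        finally show ?thesis .
      qed
      have k1: "kap * (1 - q - \<rho>) = 1 - q" using rq unfolding kap_def by simp
      have c2: "1 / (1 + \<rho>) + \<rho> / (1 + \<rho>) * kap * ((real n + 1 + real b) + q / (1 - q))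
           + 1 / (1 + \<rho>) * (kap * (real n + real b - 1)) = kap * (real n + real b)"
      proof -
        have "1 + \<rho> * kap * ((real n + 1 + real b) + q / (1 - q)) + kap * (real n + real b - 1)
            = (1 + \<rho>) * (kap * (real n + real b))"
        proof -
          have "\<rho> * kap * (q / (1 - q)) = \<rho> * kap / (1 - q) - \<rho> * kap" using q_lt1 by (simp add: field_simps)
          moreover have "\<rho> * kap / (1 - q) = kap - 1"
            using k1 q_lt1 by (simp add: field_simps)
          ultimately show ?thesis by (simp add: algebra_simps)
        qed
        moreover have "1 / (1 + \<rho>) + \<rho> / (1 + \<rho>) * kap * ((real n + 1 + real b) + q / (1 - q))
           + 1 / (1 + \<rho>) * (kap * (real n + real b - 1)) = 
           (1 + \<rho> * kap * ((real n + 1 + real b) + q / (1 - q)) + kap * (real n + real b - 1)) / (1 + \<rho>)"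
          by (simp add: add_divide_distrib)
        ultimately show ?thesis using rho_pos by simp
      qed
      have "1 / (1 + \<rho>) + \<rho> / (1 + \<rho>) * kap * ((real n + 1 + real b) + q / (1 - q))
       + 1 / (1 + \<rho>) * (real n / real (n + b)) * (kap * (real (n - 1) + real b))
       + 1 / (1 + \<rho>) * (real b / real (n + b)) * (kap * (real n + real (b - 1)))
       = 1 / (1 + \<rho>) + \<rho> / (1 + \<rho>) * kap * ((real n + 1 + real b) + q / (1 - q))
           + 1 / (1 + \<rho>) * (real n / real (n + b) * (kap * (real (n - 1) + real b)) + real b / real (n + b) * (kap * (real n + real (b - 1))))"
        by (simp only: distrib_left mult.assoc add.assoc)
      also have "\<dots> = kap * (real n + real b)" using c1 c2 by simp
      finally have "1 / (1 + \<rho>) + \<rho> / (1 + \<rho>) * kap * ((real n + 1 + real b) + q / (1 - q))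
       + 1 / (1 + \<rho>) * (real n / real (n + b)) * (kap * (real (n - 1) + real b))
       + 1 / (1 + \<rho>) * (real b / real (n + b)) * (kap * (real n + real (b - 1)))
       = kap * (real n + real b)" .
      then show ?thesis by (simp add: fsup_def)
    qed
    finally show ?thesis by simp
  qed
qed


definition L where "L = lfp (sojourn_step \<rho> q)"

lemma L_fix: "L = sojourn_step \<rho> q L"
  unfolding L_def by (rule lfp_unfold[OF step_mono])

lemma L_le: "L n b \<le> fsup n b"
proof -
  have "L \<le> fsup" unfolding L_def by (rule lfp_lowerbound) (rule super)
  then show ?thesis by (simp add: le_fun_def)
qed

definition T where "T n b = mean_sojourn_nb \<rho> q n b"

lemma L_fin: "L n b < top"
  using L_le[of n b] unfolding fsup_def by (simp add: top.not_eq_extremum le_less_trans)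

lemma L_eq: "L n b = ennreal (T n b)"
  unfolding T_def mean_sojourn_nb_def L_def[symmetric] using L_fin[of n b]
  by (simp add: ennreal_enn2real_if less_top)

lemma T_nonneg: "T n b \<ge> 0"
  unfolding T_def mean_sojourn_nb_def by simp

lemma T_le: "T n b \<le> kap * (real n + real b)"
proof -
  have "ennreal (T n b) \<le> ennreal (kap * (real n + real b))"
    using L_le[of n b] unfolding L_eq fsup_def .
  then show ?thesis using kap_pos by (subst (asm) ennreal_le_iff) auto
qed

lemma T_b0: "T n 0 = 0"
proof -
  have "L n 0 = 0" by (subst L_fix) (simp add: sojourn_step_def)
  then show ?thesis using L_eq[of n 0] T_nonneg[of n 0] by simp
qed

definition A where "A n b = (\<Sum>k. (1 - q) * q ^ k * T (n + Suc k) b)"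

lemma A_summ: "summable (\<lambda>k. (1 - q) * q ^ k * T (n + Suc k) b)"
proof (rule summable_comparison_test'[where N=0])
  show "summable (\<lambda>k. kap * ((1 - q) * q ^ k * ((real n + 1 + real b) + real k)))"
    using geo_lin[of "real n + 1 + real b"] by (intro summable_mult) (simp add: sums_iff)
  fix k :: nat
  have "T (n + Suc k) b \<le> kap * ((real n + 1 + real b) + real k)"
    using T_le[of "n + Suc k" b] by (simp add: algebra_simps)
  then show "norm ((1 - q) * q ^ k * T (n + Suc k) b) \<le> kap * ((1 - q) * q ^ k * ((real n + 1 + real b) + real k))"
    using q_pos q_lt1 T_nonneg[of "n + Suc k" b]
    by (simp add: abs_mult)
qed

lemma A_nonneg: "A n b \<ge> 0"
  unfolding A_def using A_summ q_pos q_lt1 T_nonneg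
  by (intro suminf_nonneg) auto

lemma A_le: "A n b \<le> kap * ((real n + 1 + real b) + q / (1 - q))"
proof -
  have "A n b \<le> (\<Sum>k. kap * ((1 - q) * q ^ k * ((real n + 1 + real b) + real k)))"
    unfolding A_def
  proof (rule suminf_le)
    fix k :: nat
    have "T (n + Suc k) b \<le> kap * ((real n + 1 + real b) + real k)"
      using T_le[of "n + Suc k" b] by (simp add: algebra_simps)
    then show "(1 - q) * q ^ k * T (n + Suc k) b \<le> kap * ((1 - q) * q ^ k * ((real n + 1 + real b) + real k))"
      using q_pos q_lt1 by (simp add: mult.left_commute mult_left_mono)
  qed (use A_summ geo_lin[of "real n + 1 + real b"] in \<open>auto intro!: summable_mult simp: sums_iff\<close>)
  also have "\<dots> = kap * ((real n + 1 + real b) + q / (1 - q))"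
    using geo_lin[of "real n + 1 + real b"] by (subst suminf_mult) (auto simp: sums_iff)
  finally show ?thesis .
qed

lemma T_eq:
  assumes "b \<ge> 1"
  shows "T n b = 1 / (1 + \<rho>) + \<rho> / (1 + \<rho>) * A n b
           + 1 / (1 + \<rho>) * (real n / real (n + b)) * T (n - 1) b
           + 1 / (1 + \<rho>) * (real b / real (n + b)) * T n (b - 1)"
proof -
  let ?w = "\<lambda>k. \<rho> / (1 + \<rho>) * ((1 - q) * q ^ k)"
  have wk: "?w k \<ge> 0" for k using rho_pos q_pos q_lt1 by auto
  have s1: "(\<Sum>k. ennreal (?w k) * L (n + Suc k) b) = ennreal (\<rho> / (1 + \<rho>) * A n b)"
  proof -
    have "(\<Sum>k. ennreal (?w k) * L (n + Suc k) b) = (\<Sum>k. ennreal (?w k * T (n + Suc k) b))"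
    proof (rule suminf_cong)
      fix k
      show "ennreal (?w k) * L (n + Suc k) b = ennreal (?w k * T (n + Suc k) b)"
        using ennreal_mult[OF wk[of k] T_nonneg[of "n + Suc k" b]] L_eq by auto
    qed
    also have "\<dots> = ennreal (\<Sum>k. ?w k * T (n + Suc k) b)"
    proof (rule suminf_ennreal2)
      show "0 \<le> ?w k * T (n + Suc k) b" for k
        by (intro mult_nonneg_nonneg wk T_nonneg)
      show "summable (\<lambda>k. ?w k * T (n + Suc k) b)"
        using summable_mult[OF A_summ[of n b], of "\<rho> / (1 + \<rho>)"] by (simp add: mult.assoc)
    qed
    also have "(\<Sum>k. ?w k * T (n + Suc k) b) = \<rho> / (1 + \<rho>) * A n b"
      unfolding A_def using suminf_mult[OF A_summ[of n b], of "\<rho> / (1 + \<rho>)"] by (simp add: mult.assoc)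
    finally show ?thesis .
  qed
  have c1: "0 \<le> 1 / (1 + \<rho>) * (real n / real (n + b))" using rho_pos by simp
  have c2: "0 \<le> 1 / (1 + \<rho>) * (real b / real (n + b))" using rho_pos by simp
  have "ennreal (T n b) = L n b" by (simp add: L_eq)
  also have "\<dots> = sojourn_step \<rho> q L n b" by (subst L_fix) simp
  also have "\<dots> = ennreal (1 / (1 + \<rho>)) + ennreal (\<rho> / (1 + \<rho>) * A n b)
           + ennreal (1 / (1 + \<rho>) * (real n / real (n + b)) * T (n - 1) b)
           + ennreal (1 / (1 + \<rho>) * (real b / real (n + b)) * T n (b - 1))"
  proof -
    have "sojourn_step \<rho> q L n b = ennreal (1 / (1 + \<rho>)) + (\<Sum>k. ennreal (?w k) * L (n + Suc k) b)
        + ennreal (1 / (1 + \<rho>) * (real n / real (n + b))) * L (n - 1) b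
        + ennreal (1 / (1 + \<rho>) * (real b / real (n + b))) * L n (b - 1)"
      using assms by (simp add: sojourn_step_def)
    moreover have "ennreal (1 / (1 + \<rho>) * (real n / real (n + b))) * L (n - 1) b
       = ennreal (1 / (1 + \<rho>) * (real n / real (n + b)) * T (n - 1) b)"
      using ennreal_mult[OF c1 T_nonneg] L_eq by simp
    moreover have "ennreal (1 / (1 + \<rho>) * (real b / real (n + b))) * L n (b - 1)
       = ennreal (1 / (1 + \<rho>) * (real b / real (n + b)) * T n (b - 1))"
      using ennreal_mult[OF c2 T_nonneg] L_eq by simp
    ultimately show ?thesis using s1 by simp
  qed
  also have "\<dots> = ennreal (1 / (1 + \<rho>) + \<rho> / (1 + \<rho>) * A n b
           + 1 / (1 + \<rho>) * (real n / real (n + b)) * T (n - 1) b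
           + 1 / (1 + \<rho>) * (real b / real (n + b)) * T n (b - 1))"
    by (rule ennreal_plus4) (use rho_pos A_nonneg c1 c2 T_nonneg in auto)
  finally show ?thesis
    using T_nonneg A_nonneg rho_pos c1 c2 
    by (subst (asm) ennreal_inj) (auto intro!: add_nonneg_nonneg mult_nonneg_nonneg)
qed

end

lemma summable_quad_bound:
  fixes f :: "nat \<Rightarrow> real"
  assumes "\<And>n. \<bar>f n\<bar> \<le> C * (real n + 1)^2" "0 \<le> x" "x < 1"
  shows "summable (\<lambda>n. f n * x ^ n)"
proof (rule summable_comparison_test'[where N=0])
  show "summable (\<lambda>n. C * ((real n + 1)^2 * x ^ n))"
    by (intro summable_mult summable_n2 assms)
  fix n :: nat
  show "norm (f n * x ^ n) \<le> C * ((real n + 1)^2 * x ^ n)"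
    using assms(1)[of n] assms(2) by (simp add: abs_mult mult_right_mono mult.assoc[symmetric])
qed

lemma suminf_lin2:
  fixes P Q :: "nat \<Rightarrow> real"
  assumes "summable P" "summable Q"
  shows "(\<Sum>n. c * (P n + d * Q n)) = c * (suminf P + d * suminf Q)"
proof -
  have "(\<lambda>n. c * (P n + d * Q n)) sums (c * (suminf P + d * suminf Q))"
    by (intro sums_mult sums_add summable_sums assms)
  then show ?thesis by (simp add: sums_iff)
qed

context pq begin

lemma T_bound2: "\<bar>T n b\<bar> \<le> kap * (real b + 1) * (real n + 1)^2"
proof -
  have "T n b \<le> kap * (real n + real b)" by (rule T_le)
  also have "\<dots> \<le> kap * ((real b + 1) * (real n + 1)^2)"
    using kap_pos by (intro mult_left_mono) (auto simp: power2_eq_square algebra_simps)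
  finally show ?thesis using T_nonneg[of n b] by (simp add: mult.assoc)
qed

lemma nT_bound2: "\<bar>real n * T n b\<bar> \<le> kap * (real b + 1) * (real n + 1)^2"
proof -
  have "real n * T n b \<le> real n * (kap * (real n + real b))"
    using T_le by (intro mult_left_mono) auto
  also have "\<dots> \<le> kap * ((real b + 1) * (real n + 1)^2)"
    using kap_pos by (simp add: power2_eq_square algebra_simps mult_left_mono)
  finally show ?thesis using T_nonneg[of n b] by (simp add: mult.assoc)
qed

lemma aux_quad1: "0 \<le> (m::real) \<Longrightarrow> 0 \<le> B \<Longrightarrow> 0 \<le> Q \<Longrightarrow> m + 1 + B + Q \<le> (B + 2 + Q) * (m + 1)^2"
proof -
  assume a: "0 \<le> m" "0 \<le> B" "0 \<le> Q"
  have "(B + Q) * 1 \<le> (B + Q) * (m + 1)^2" using a mult_nonneg_nonneg[of m m] by (intro mult_left_mono) (auto simp: power2_eq_square algebra_simps)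
  moreover have "m + 1 \<le> 2 * (m + 1)^2" using a by (simp add: power2_eq_square algebra_simps)
  ultimately show ?thesis by (simp add: algebra_simps)
qed

lemma aux_quad2: "0 \<le> (m::real) \<Longrightarrow> 0 \<le> B \<Longrightarrow> 0 \<le> Q \<Longrightarrow> m * (m + 1 + B + Q) \<le> (B + 2 + Q) * (m + 1)^2"
proof -
  assume a: "0 \<le> m" "0 \<le> B" "0 \<le> Q"
  have "m * (B + Q) \<le> (m + 1)^2 * (B + Q)" using a mult_nonneg_nonneg[of m m] by (intro mult_right_mono) (auto simp: power2_eq_square algebra_simps)
  moreover have "m * (m + 1) \<le> 2 * (m + 1)^2" using a by (simp add: power2_eq_square algebra_simps)
  ultimately show ?thesis by (simp add: algebra_simps power2_eq_square)
qed

definition cA where "cA b = kap * (real b + 2 + q / (1 - q))"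

lemma cA_pos: "cA b \<ge> 0" using kap_pos q_pos q_lt1 by (simp add: cA_def)

lemma A_bound2: "\<bar>A n b\<bar> \<le> cA b * (real n + 1)^2"
proof -
  have "A n b \<le> kap * ((real n + 1 + real b) + q / (1 - q))" by (rule A_le)
  also have "\<dots> \<le> cA b * (real n + 1)^2"
    unfolding cA_def using kap_pos q_pos q_lt1 aux_quad1[of "real n" "real b" "q / (1 - q)"]
    by (simp add: mult.assoc)
  finally show ?thesis using A_nonneg[of n b] kap_pos by simp
qed

lemma nA_bound2: "\<bar>real n * A n b\<bar> \<le> cA b * (real n + 1)^2"
proof -
  have "real n * A n b \<le> real n * (kap * ((real n + 1 + real b) + q / (1 - q)))"
    using A_le by (intro mult_left_mono) auto
  also have "\<dots> \<le> cA b * (real n + 1)^2"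
    unfolding cA_def using kap_pos q_pos q_lt1 aux_quad2[of "real n" "real b" "q / (1 - q)"]
    by (simp add: mult.assoc mult.left_commute)
  finally show ?thesis using A_nonneg[of n b] by simp
qed

lemma sm_T: "0 \<le> x \<Longrightarrow> x < 1 \<Longrightarrow> summable (\<lambda>n. T n b * x ^ n)"
  by (rule summable_quad_bound[OF T_bound2])
lemma sm_nT: "0 \<le> x \<Longrightarrow> x < 1 \<Longrightarrow> summable (\<lambda>n. (real n * T n b) * x ^ n)"
  by (rule summable_quad_bound[OF nT_bound2])
lemma sm_A: "0 \<le> x \<Longrightarrow> x < 1 \<Longrightarrow> summable (\<lambda>n. A n b * x ^ n)"
  by (rule summable_quad_bound[OF A_bound2])
lemma sm_nA: "0 \<le> x \<Longrightarrow> x < 1 \<Longrightarrow> summable (\<lambda>n. (real n * A n b) * x ^ n)"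
  by (rule summable_quad_bound[OF nA_bound2])

lemma A_rec: "A n b = (1 - q) * T (Suc n) b + q * A (Suc n) b"
proof -
  have s: "summable (\<lambda>k. (1 - q) * q ^ k * T (n + Suc k) b)" by (rule A_summ)
  have "A n b = (\<Sum>k. (1 - q) * q ^ Suc k * T (n + Suc (Suc k)) b) + (1 - q) * T (Suc n) b"
    unfolding A_def using suminf_split_head[OF s] by simp
  also have "(\<Sum>k. (1 - q) * q ^ Suc k * T (n + Suc (Suc k)) b) = q * A (Suc n) b"
    unfolding A_def using suminf_mult[OF A_summ[of "Suc n" b], of q]
    by (simp add: algebra_simps)
  finally show ?thesis by simp
qed

definition S where "S x b = (\<Sum>n. T n b * x ^ n)"
definition S1 where "S1 x b = (\<Sum>n. (real n * T n b) * x ^ n)"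
definition SA where "SA x b = (\<Sum>n. A n b * x ^ n)"
definition SA1 where "SA1 x b = (\<Sum>n. (real n * A n b) * x ^ n)"

lemma shift0:
  fixes f :: "nat \<Rightarrow> real"
  assumes "summable (\<lambda>n. f n * x ^ n)"
  shows "x * (\<Sum>n. f (Suc n) * x ^ n) = (\<Sum>n. f n * x ^ n) - f 0"
  using powser_split_head(2)[OF assms] by (simp add: mult.commute)

lemma A0_eq: "q * A 0 b = (1 - q) * (S q b - T 0 b)"
proof -
  have sT: "summable (\<lambda>n. T n b * q ^ n)" using sm_T q_pos q_lt1 by auto
  have sT1: "summable (\<lambda>n. T (Suc n) b * q ^ n)" using sT by (rule powser_split_head(3))
  have "A 0 b = (\<Sum>k. (1 - q) * (T (Suc k) b * q ^ k))"
    unfolding A_def by (simp add: algebra_simps)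
  also have "\<dots> = (1 - q) * (\<Sum>k. T (Suc k) b * q ^ k)"
    by (rule suminf_mult[OF sT1])
  finally have "q * A 0 b = (1 - q) * (q * (\<Sum>k. T (Suc k) b * q ^ k))" by simp
  also have "q * (\<Sum>k. T (Suc k) b * q ^ k) = S q b - T 0 b"
    using shift0[OF sT] unfolding S_def .
  finally show ?thesis .
qed

lemma X_eq:
  assumes "0 \<le> x" "x < 1"
  shows "(x - q) * SA x b = (1 - q) * (S x b - S q b)"
proof -
  have sT: "summable (\<lambda>n. T n b * x ^ n)" using sm_T assms by auto
  have sA: "summable (\<lambda>n. A n b * x ^ n)" using sm_A assms by auto
  have sT1: "summable (\<lambda>n. T (Suc n) b * x ^ n)" using sT by (rule powser_split_head(3))
  have sA1: "summable (\<lambda>n. A (Suc n) b * x ^ n)" using sA by (rule powser_split_head(3))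
  have "SA x b = (\<Sum>n. (1 - q) * (T (Suc n) b * x ^ n) + q * (A (Suc n) b * x ^ n))"
    unfolding SA_def by (subst A_rec) (simp add: algebra_simps)
  also have "\<dots> = (1 - q) * (\<Sum>n. T (Suc n) b * x ^ n) + q * (\<Sum>n. A (Suc n) b * x ^ n)"
    using sT1 sA1 by (simp add: suminf_add[symmetric] summable_mult suminf_mult)
  finally have e: "SA x b = (1 - q) * (\<Sum>n. T (Suc n) b * x ^ n) + q * (\<Sum>n. A (Suc n) b * x ^ n)" .
  have h1: "x * (\<Sum>n. T (Suc n) b * x ^ n) = S x b - T 0 b"
    using shift0[OF sT] unfolding S_def .
  have h2: "x * (\<Sum>n. A (Suc n) b * x ^ n) = SA x b - A 0 b"
    using shift0[OF sA] unfolding SA_def .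
  have "x * SA x b = (1 - q) * (x * (\<Sum>n. T (Suc n) b * x ^ n)) + q * (x * (\<Sum>n. A (Suc n) b * x ^ n))"
    by (subst e) (simp add: algebra_simps)
  also have "\<dots> = (1 - q) * (S x b - T 0 b) + (q * SA x b - q * A 0 b)"
    unfolding h1 h2 by (simp add: algebra_simps)
  finally have "x * SA x b - q * SA x b = (1 - q) * (S x b - T 0 b) - q * A 0 b" by simp
  also have "\<dots> = (1 - q) * (S x b - S q b)" unfolding A0_eq by (simp add: algebra_simps)
  finally show ?thesis by (simp add: algebra_simps)
qed


lemma shift1:
  fixes f :: "nat \<Rightarrow> real"
  assumes s0: "summable (\<lambda>n. f n * x ^ n)" and s1: "summable (\<lambda>n. (real n * f n) * x ^ n)"
  shows "summable (\<lambda>n. (real n * f (Suc n)) * x ^ n)"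
    and "x * (\<Sum>n. (real n * f (Suc n)) * x ^ n) = (\<Sum>n. (real n * f n) * x ^ n) - (\<Sum>n. f n * x ^ n) + f 0"
proof -
  let ?h = "\<lambda>m. (real m - 1) * f m"
  have sh: "summable (\<lambda>m. ?h m * x ^ m)"
    using summable_diff[OF s1 s0] by (simp add: algebra_simps)
  have sh1: "summable (\<lambda>n. ?h (Suc n) * x ^ n)" using sh by (rule powser_split_head(3))
  then show "summable (\<lambda>n. (real n * f (Suc n)) * x ^ n)" by simp
  have "(\<Sum>m. ?h m * x ^ m) = (\<Sum>n. (real n * f n) * x ^ n) - (\<Sum>n. f n * x ^ n)"
    using suminf_diff[OF s1 s0] by (simp add: algebra_simps)
  then show "x * (\<Sum>n. (real n * f (Suc n)) * x ^ n) = (\<Sum>n. (real n * f n) * x ^ n) - (\<Sum>n. f n * x ^ n) + f 0"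
    using shift0[OF sh] by simp
qed

lemma Y_eq:
  assumes "0 \<le> x" "x < 1"
  shows "x * SA1 x b = (1 - q) * (S1 x b - S x b + T 0 b) + q * (SA1 x b - SA x b + A 0 b)"
proof -
  have sT: "summable (\<lambda>n. T n b * x ^ n)" using sm_T assms by auto
  have sA: "summable (\<lambda>n. A n b * x ^ n)" using sm_A assms by auto
  have snT: "summable (\<lambda>n. (real n * T n b) * x ^ n)" using sm_nT assms by auto
  have snA: "summable (\<lambda>n. (real n * A n b) * x ^ n)" using sm_nA assms by auto
  note a = shift1[of "\<lambda>n. T n b", OF sT snT] and c = shift1[of "\<lambda>n. A n b", OF sA snA]
  have "SA1 x b = (\<Sum>n. (1 - q) * ((real n * T (Suc n) b) * x ^ n) + q * ((real n * A (Suc n) b) * x ^ n))"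
    unfolding SA1_def by (subst A_rec) (simp add: algebra_simps)
  also have "\<dots> = (1 - q) * (\<Sum>n. (real n * T (Suc n) b) * x ^ n) + q * (\<Sum>n. (real n * A (Suc n) b) * x ^ n)"
    using a(1) c(1) by (simp add: suminf_add[symmetric] summable_mult suminf_mult)
  finally have e: "SA1 x b = (1 - q) * (\<Sum>n. (real n * T (Suc n) b) * x ^ n) + q * (\<Sum>n. (real n * A (Suc n) b) * x ^ n)" .
  have "x * SA1 x b = (1 - q) * (x * (\<Sum>n. (real n * T (Suc n) b) * x ^ n)) + q * (x * (\<Sum>n. (real n * A (Suc n) b) * x ^ n))"
    by (subst e) (simp add: algebra_simps)
  also have "\<dots> = (1 - q) * (S1 x b - S x b + T 0 b) + q * (SA1 x b - SA x b + A 0 b)"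
    unfolding a(2) c(2) S_def S1_def SA_def SA1_def ..
  finally show ?thesis .
qed

lemma pointwise_eq:
  assumes "b \<ge> 1"
  shows "(1 + \<rho>) * ((real n + real b) * T n b) = (real n + real b) + \<rho> * ((real n + real b) * A n b)
          + real n * T (n - 1) b + real b * T n (b - 1)"
proof -
  have nb: "real n + real b > 0" using assms by simp
  have "(1 + \<rho>) * ((real n + real b) * T n b) = (real n + real b) * ((1 + \<rho>) * T n b)" by simp
  also have "(1 + \<rho>) * T n b = 1 + \<rho> * A n b + (real n / real (n + b)) * T (n - 1) b
           + (real b / real (n + b)) * T n (b - 1)"
  proof -
    have r: "1 + \<rho> \<noteq> 0" using rho_pos by simp
    have g: "\<And>a c t d s'. (1 + \<rho>) * (1 / (1 + \<rho>) + \<rho> / (1 + \<rho>) * a + 1 / (1 + \<rho>) * c * t + 1 / (1 + \<rho>) * d * s')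
       = 1 + \<rho> * a + c * t + d * s'"
    proof -
      fix a c t d s'
      have "1 / (1 + \<rho>) + \<rho> / (1 + \<rho>) * a + 1 / (1 + \<rho>) * c * t + 1 / (1 + \<rho>) * d * s'
         = (1 + \<rho> * a + c * t + d * s') / (1 + \<rho>)" by (simp add: add_divide_distrib)
      then show "(1 + \<rho>) * (1 / (1 + \<rho>) + \<rho> / (1 + \<rho>) * a + 1 / (1 + \<rho>) * c * t + 1 / (1 + \<rho>) * d * s')
       = 1 + \<rho> * a + c * t + d * s'" using r by simp
    qed
    show ?thesis by (subst T_eq[OF assms]) (rule g)
  qed
  also have "(real n + real b) * \<dots> = (real n + real b) + \<rho> * ((real n + real b) * A n b)
          + real n * T (n - 1) b + real b * T n (b - 1)"
  proof -
    have N: "real n + real b \<noteq> 0" using nb by simp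
    have "\<And>N a t s'. N \<noteq> 0 \<Longrightarrow> N * (1 + \<rho> * a + (real n / N) * t + (real b / N) * s') = N + \<rho> * (N * a) + real n * t + real b * s'"
      by (simp add: distrib_left)
    from this[OF N] show ?thesis by simp
  qed
  finally show ?thesis .
qed

lemma main_sum:
  assumes "b \<ge> 1" "0 \<le> x" "x < 1"
  shows "(1 + \<rho>) * (S1 x b + real b * S x b) = x / (1 - x)^2 + real b / (1 - x)
     + \<rho> * (SA1 x b + real b * SA x b) + x * (S1 x b + S x b) + real b * S x (b - 1)"
proof -
  have sT: "summable (\<lambda>n. T n b * x ^ n)" using sm_T assms by auto
  have sA: "summable (\<lambda>n. A n b * x ^ n)" using sm_A assms by auto
  have snT: "summable (\<lambda>n. (real n * T n b) * x ^ n)" using sm_nT assms by auto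
  have snA: "summable (\<lambda>n. (real n * A n b) * x ^ n)" using sm_nA assms by auto
  have sTp: "summable (\<lambda>n. T n (b - 1) * x ^ n)" using sm_T assms by auto
  have geo: "(\<lambda>n. (real b + 1 * real n) * x ^ n) sums (real b / (1 - x) + 1 * x / (1 - x)^2)"
    by (rule sum_lin_geom) (use assms in auto)
  let ?h = "\<lambda>m. (real m * T (m - 1) b) * x ^ m"
  have h1: "(\<lambda>n. ?h (Suc n)) = (\<lambda>n. x * ((real n * T n b) * x ^ n + T n b * x ^ n))"
    by (auto simp: algebra_simps)
  have sh1: "summable (\<lambda>n. ?h (Suc n))" unfolding h1
    by (intro summable_mult summable_add snT sT)
  have sh: "summable ?h" by (rule iffD1[OF summable_Suc_iff sh1])
  have vh: "(\<Sum>n. ?h n) = x * (S1 x b + S x b)"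
  proof -
    have "(\<Sum>n. ?h n) = (\<Sum>n. ?h (Suc n))" using suminf_split_head[OF sh] by simp
    also have "\<dots> = x * (S1 x b + S x b)"
      unfolding h1 S1_def S_def using suminf_mult[OF summable_add[OF snT sT], of x] suminf_add[OF snT sT] by simp
    finally show ?thesis .
  qed
  have L: "(\<Sum>n. (1 + \<rho>) * ((real n + real b) * T n b) * x ^ n) = (1 + \<rho>) * (S1 x b + real b * S x b)"
  proof -
    have "(\<lambda>n. (1 + \<rho>) * ((real n + real b) * T n b) * x ^ n) = (\<lambda>n. (1 + \<rho>) * ((real n * T n b) * x ^ n + real b * (T n b * x ^ n)))"
      by (auto simp: algebra_simps)
    then show ?thesis unfolding S1_def S_def
      using suminf_lin2[OF snT sT, of "1 + \<rho>" "real b"] by simp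
  qed
  have R: "(\<Sum>n. ((real n + real b) + \<rho> * ((real n + real b) * A n b) + real n * T (n - 1) b + real b * T n (b - 1)) * x ^ n)
     = (x / (1 - x)^2 + real b / (1 - x)) + \<rho> * (SA1 x b + real b * SA x b) + x * (S1 x b + S x b) + real b * S x (b - 1)"
  proof -
    have e: "(\<lambda>n. ((real n + real b) + \<rho> * ((real n + real b) * A n b) + real n * T (n - 1) b + real b * T n (b - 1)) * x ^ n)
      = (\<lambda>n. (real b + 1 * real n) * x ^ n + \<rho> * ((real n * A n b) * x ^ n + real b * (A n b * x ^ n)) + ?h n + real b * (T n (b - 1) * x ^ n))"
      by (auto simp: algebra_simps)
    have s1: "summable (\<lambda>n. (real b + 1 * real n) * x ^ n)" using geo by (simp add: sums_iff)
    have s2: "summable (\<lambda>n. \<rho> * ((real n * A n b) * x ^ n + real b * (A n b * x ^ n)))"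
      by (intro summable_mult summable_add snA sA)
    have s3: "summable (\<lambda>n. real b * (T n (b - 1) * x ^ n))" by (intro summable_mult sTp)
    have "(\<Sum>n. (real b + 1 * real n) * x ^ n + \<rho> * ((real n * A n b) * x ^ n + real b * (A n b * x ^ n)) + ?h n + real b * (T n (b - 1) * x ^ n))
        = (\<Sum>n. (real b + 1 * real n) * x ^ n) + (\<Sum>n. \<rho> * ((real n * A n b) * x ^ n + real b * (A n b * x ^ n))) + (\<Sum>n. ?h n) + (\<Sum>n. real b * (T n (b - 1) * x ^ n))"
      using s1 s2 s3 sh by (simp add: suminf_add[symmetric] summable_add)
    also have "(\<Sum>n. (real b + 1 * real n) * x ^ n) = x / (1 - x)^2 + real b / (1 - x)"
      using geo by (simp add: sums_iff)
    also have "(\<Sum>n. \<rho> * ((real n * A n b) * x ^ n + real b * (A n b * x ^ n))) = \<rho> * (SA1 x b + real b * SA x b)"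
      unfolding SA1_def SA_def using suminf_lin2[OF snA sA, of \<rho> "real b"] by simp
    also have "(\<Sum>n. real b * (T n (b - 1) * x ^ n)) = real b * S x (b - 1)"
      unfolding S_def using sTp by (simp add: suminf_mult)
    finally show ?thesis unfolding e vh by simp
  qed
  have "(\<Sum>n. (1 + \<rho>) * ((real n + real b) * T n b) * x ^ n)
     = (\<Sum>n. ((real n + real b) + \<rho> * ((real n + real b) * A n b) + real n * T (n - 1) b + real b * T n (b - 1)) * x ^ n)"
    using pointwise_eq[OF assms(1)] by simp
  then show ?thesis unfolding L R by simp
qed


definition u where "u = \<rho> + q"

lemma u_pos: "0 < u" and u_lt1: "u < 1" and q_lt_u: "q < u"
  using rho_pos q_pos rq by (auto simp: u_def)

lemma R1:
  assumes "b \<ge> 1"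
  shows "u * (\<rho> * real b + 1 - q - \<rho>) * S u b
     = \<rho> * (u / (1 - u)^2 + real b / (1 - u)) + (1 - q) * (u - \<rho> * real b) * S q b + \<rho> * real b * S u (b - 1)"
proof -
  have x0: "0 \<le> u" "u < 1" using u_pos u_lt1 by auto
  note M = main_sum[OF assms x0]
  note X = X_eq[OF x0, of b]
  note Y = Y_eq[OF x0, of b]
  note Z = A0_eq[of b]
  have uq: "u - q = \<rho>" by (simp add: u_def)
  show ?thesis using M X Y Z uq unfolding u_def by algebra
qed

lemma R2:
  assumes "b \<ge> 1"
  shows "(q + \<rho>) * T 0 b = q + \<rho> * (1 - q) * S q b + q * T 0 (b - 1)"
proof -
  have "T 0 b = 1 / (1 + \<rho>) + \<rho> / (1 + \<rho>) * A 0 b + 1 / (1 + \<rho>) * T 0 (b - 1)"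
    using T_eq[OF assms, of 0] assms by simp
  also have "\<dots> = (1 + \<rho> * A 0 b + T 0 (b - 1)) / (1 + \<rho>)"
    by (simp add: add_divide_distrib)
  finally have e: "(1 + \<rho>) * T 0 b = 1 + \<rho> * A 0 b + T 0 (b - 1)"
    using rho_pos by simp
  have "q * ((1 + \<rho>) * T 0 b) = q + \<rho> * (q * A 0 b) + q * T 0 (b - 1)"
    unfolding e by (simp add: algebra_simps)
  then show ?thesis unfolding A0_eq by (simp add: algebra_simps)
qed

end

lemma infsum_pairs_nonneg:
  fixes f :: "nat \<Rightarrow> nat \<Rightarrow> real"
  assumes nn: "\<And>n b. 0 \<le> f n b" and f0: "\<And>n. f n 0 = 0"
    and s1: "\<And>b. summable (\<lambda>n. f n b)" and s2: "summable (\<lambda>b. \<Sum>n. f n b)"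
  shows "(\<Sum>\<^sub>\<infinity>(n, b)\<in>UNIV \<times> {1..}. f n b) = (\<Sum>b. \<Sum>n. f n b)"
proof -
  have hs: "((\<lambda>n. f n b) has_sum (\<Sum>n. f n b)) UNIV" for b
    by (rule norm_summable_imp_has_sum) (use nn s1 in \<open>auto intro: summable_sums\<close>)
  have gnn: "0 \<le> (\<Sum>n. f n b)" for b using nn s1 by (intro suminf_nonneg) auto
  have outerU: "(\<lambda>b. \<Sum>n. f n b) summable_on UNIV"
    by (rule summable_nonneg_imp_summable_on[OF s2 gnn])
  have outer: "(\<lambda>b. \<Sum>n. f n b) summable_on {1..}"
    by (rule summable_on_subset[OF outerU]) auto
  have sig: "(\<lambda>(b, n). f n b) summable_on Sigma {1..} (\<lambda>_. UNIV)"
    by (rule summable_on_SigmaI[where g = "\<lambda>b. \<Sum>n. f n b"]) (use hs outer nn in auto)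
  have bij: "bij_betw prod.swap ({1..} \<times> (UNIV :: nat set)) (UNIV \<times> {1..})"
    by (auto simp: bij_betw_def image_iff)
  have "(\<Sum>\<^sub>\<infinity>(n, b)\<in>UNIV \<times> {1..}. f n b) = (\<Sum>\<^sub>\<infinity>x\<in>{1..} \<times> UNIV. (\<lambda>(n, b). f n b) (prod.swap x))"
    by (rule infsum_reindex_bij_betw[OF bij, symmetric])
  also have "\<dots> = (\<Sum>\<^sub>\<infinity>(b, n)\<in>Sigma {1..} (\<lambda>_. UNIV). f n b)"
    by (rule infsum_cong) auto
  also have "\<dots> = (\<Sum>\<^sub>\<infinity>b\<in>{1..}. \<Sum>\<^sub>\<infinity>n\<in>UNIV. f n b)"
    using infsum_Sigma'_banach[of "\<lambda>b n. f n b", OF sig] by simp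
  also have "\<dots> = (\<Sum>\<^sub>\<infinity>b\<in>{1..}. \<Sum>n. f n b)"
    by (rule infsum_cong) (use hs in \<open>auto simp: has_sum_iff\<close>)
  also have "\<dots> = (\<Sum>\<^sub>\<infinity>b\<in>UNIV. \<Sum>n. f n b)"
    by (rule infsum_cong_neutral) (auto simp: f0 not_less_eq_eq)
  also have "\<dots> = (\<Sum>b. \<Sum>n. f n b)"
  proof -
    have "((\<lambda>b. \<Sum>n. f n b) has_sum (\<Sum>b. \<Sum>n. f n b)) UNIV"
      by (rule norm_summable_imp_has_sum) (use gnn s2 in \<open>auto intro: summable_sums\<close>)
    then show ?thesis by (simp add: has_sum_iff)
  qed
  finally show ?thesis .
qed

lemma le_sq1: "1 \<le> (real b + 1)^2"
  by (rule one_le_power) simp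

lemma le_sq2: "real b \<le> (real b + 1)^2"
proof -
  have "real b + 1 \<le> (real b + 1)^2" by (rule self_le_power) auto
  then show ?thesis by simp
qed

context pq begin

lemma S_b0: "S x 0 = 0" by (simp add: S_def T_b0)

lemma S_nonneg: "0 \<le> x \<Longrightarrow> x < 1 \<Longrightarrow> 0 \<le> S x b"
  unfolding S_def using sm_T T_nonneg by (intro suminf_nonneg) auto

lemma S_le:
  assumes "0 \<le> x" "x < 1"
  shows "S x b \<le> kap * (x / (1 - x)^2 + real b / (1 - x))"
proof -
  have geo: "(\<lambda>n. (real b + 1 * real n) * x ^ n) sums (real b / (1 - x) + 1 * x / (1 - x)^2)"
    by (rule sum_lin_geom) (use assms in auto)
  have "S x b \<le> (\<Sum>n. kap * ((real b + 1 * real n) * x ^ n))"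
    unfolding S_def
  proof (rule suminf_le)
    fix n
    have "T n b * x ^ n \<le> (kap * (real n + real b)) * x ^ n"
      by (rule mult_right_mono[OF T_le]) (use assms in simp)
    then show "T n b * x ^ n \<le> kap * ((real b + 1 * real n) * x ^ n)"
      by (simp add: algebra_simps)
  qed (use sm_T assms geo in \<open>auto intro!: summable_mult simp: sums_iff\<close>)
  also have "\<dots> = kap * (x / (1 - x)^2 + real b / (1 - x))"
    using geo by (subst suminf_mult) (auto simp: sums_iff)
  finally show ?thesis .
qed

lemma S_bound2:
  assumes "0 \<le> x" "x < 1"
  shows "\<bar>S x b\<bar> \<le> (kap * (x / (1 - x)^2 + 1 / (1 - x))) * (real b + 1)^2"
proof -
  have c0: "0 \<le> x / (1 - x)^2" "0 \<le> 1 / (1 - x)" using assms by auto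
  have "S x b \<le> kap * (x / (1 - x)^2 + real b / (1 - x))" by (rule S_le[OF assms])
  also have "\<dots> \<le> kap * ((x / (1 - x)^2 + 1 / (1 - x)) * (real b + 1)^2)"
  proof (intro mult_left_mono)
    have "real b / (1 - x) = real b * (1 / (1 - x))" by simp
    also have "\<dots> \<le> ((real b + 1)^2) * (1 / (1 - x))"
      using c0 le_sq2 by (intro mult_right_mono) auto
    finally have a: "real b / (1 - x) \<le> (real b + 1)^2 * (1 / (1 - x))" .
    have b': "x / (1 - x)^2 \<le> (real b + 1)^2 * (x / (1 - x)^2)"
      using mult_right_mono[OF le_sq1 c0(1)] by simp
    show "x / (1 - x)^2 + real b / (1 - x) \<le> (x / (1 - x)^2 + 1 / (1 - x)) * (real b + 1)^2"
      using a b' by (simp add: algebra_simps)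
  qed (use kap_pos in auto)
  finally show ?thesis using S_nonneg[OF assms, of b] by (simp add: mult.assoc)
qed

lemma sm_S: "0 \<le> x \<Longrightarrow> x < 1 \<Longrightarrow> 0 \<le> v \<Longrightarrow> v < 1 \<Longrightarrow> summable (\<lambda>b. S x b * v ^ b)"
  by (rule summable_quad_bound[OF S_bound2])

lemma sm_T0: "0 \<le> v \<Longrightarrow> v < 1 \<Longrightarrow> summable (\<lambda>b. T 0 b * v ^ b)"
proof (rule summable_quad_bound[of _ "kap"])
  fix b
  have "T 0 b \<le> kap * real b" using T_le[of 0 b] by simp
  also have "\<dots> \<le> kap * (real b + 1)^2" using le_sq2 kap_pos by (intro mult_left_mono) auto
  finally show "\<bar>T 0 b\<bar> \<le> kap * (real b + 1)^2" using T_nonneg[of 0 b] by simp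
qed

lemma E1_eq:
  assumes "0 \<le> v" "v < 1"
  shows "E1 \<rho> q v = - (\<Sum>b. S q b * v ^ b)"
proof -
  let ?f = "\<lambda>n b. T n b * q ^ n * v ^ b"
  have nn: "0 \<le> ?f n b" for n b using T_nonneg assms q_pos by auto
  have s1: "summable (\<lambda>n. ?f n b)" for b
    using summable_mult2[OF sm_T[of q b], of "v ^ b"] q_pos q_lt1 by (simp add: mult.assoc)
  have inner: "(\<Sum>n. ?f n b) = S q b * v ^ b" for b
    unfolding S_def using suminf_mult2[OF sm_T[of q b], of "v ^ b"] q_pos q_lt1 by (simp add: mult.assoc)
  have s2: "summable (\<lambda>b. \<Sum>n. ?f n b)" unfolding inner using sm_S q_pos q_lt1 assms by auto
  have "E1 \<rho> q v = - (\<Sum>\<^sub>\<infinity>(n, b)\<in>UNIV \<times> {1..}. ?f n b)"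
    unfolding E1_def T_def ..
  also have "\<dots> = - (\<Sum>b. \<Sum>n. ?f n b)"
    by (subst infsum_pairs_nonneg[OF nn _ s1 s2]) (auto simp: T_b0)
  finally show ?thesis unfolding inner .
qed


definition Kq where "Kq = (\<Sum>b. S u b * q ^ b)"
definition Gf where "Gf x = (\<Sum>b. S q b * x ^ b)"
definition Zq where "Zq = (\<Sum>b. T 0 b * q ^ b)"

lemma Z_eq: "(q + \<rho> - q^2) * Zq = q^2 / (1 - q) + \<rho> * (1 - q) * Gf q"
proof -
  have q0: "0 \<le> q" "q < 1" using q_pos q_lt1 by auto
  have sZ: "summable (\<lambda>b. T 0 b * q ^ b)" using sm_T0 q0 by auto
  have sG: "summable (\<lambda>b. S q b * q ^ b)" using sm_S q0 by auto
  have sZ1: "summable (\<lambda>b. T 0 (Suc b) * q ^ b)" using sZ by (rule powser_split_head(3))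
  have sG1: "summable (\<lambda>b. S q (Suc b) * q ^ b)" using sG by (rule powser_split_head(3))
  have e: "(\<lambda>b. (q + \<rho>) * (T 0 (Suc b) * q ^ b)) = (\<lambda>b. q * q ^ b + \<rho> * (1 - q) * (S q (Suc b) * q ^ b) + q * (T 0 b * q ^ b))"
  proof
    fix b
    have "(q + \<rho>) * T 0 (Suc b) = q + \<rho> * (1 - q) * S q (Suc b) + q * T 0 b"
      using R2[of "Suc b"] by simp
    then have "((q + \<rho>) * T 0 (Suc b)) * q ^ b = (q + \<rho> * (1 - q) * S q (Suc b) + q * T 0 b) * q ^ b"
      by simp
    then show "(q + \<rho>) * (T 0 (Suc b) * q ^ b) = q * q ^ b + \<rho> * (1 - q) * (S q (Suc b) * q ^ b) + q * (T 0 b * q ^ b)"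
      by (simp add: algebra_simps)
  qed
  have l: "(\<lambda>b. (q + \<rho>) * (T 0 (Suc b) * q ^ b)) sums ((q + \<rho>) * (\<Sum>b. T 0 (Suc b) * q ^ b))"
    by (intro sums_mult summable_sums sZ1)
  have r: "(\<lambda>b. q * q ^ b + \<rho> * (1 - q) * (S q (Suc b) * q ^ b) + q * (T 0 b * q ^ b)) sums
     (q * (1 / (1 - q)) + \<rho> * (1 - q) * (\<Sum>b. S q (Suc b) * q ^ b) + q * Zq)"
    unfolding Zq_def using q0
    by (intro sums_add sums_mult summable_sums sZ sG1 geometric_sums) auto
  have eq: "(q + \<rho>) * (\<Sum>b. T 0 (Suc b) * q ^ b) = q * (1 / (1 - q)) + \<rho> * (1 - q) * (\<Sum>b. S q (Suc b) * q ^ b) + q * Zq"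
    using sums_unique2[OF l[unfolded e] r] .
  have z1: "q * (\<Sum>b. T 0 (Suc b) * q ^ b) = Zq"
    using shift0[OF sZ] unfolding Zq_def by (simp add: T_b0)
  have g1: "q * (\<Sum>b. S q (Suc b) * q ^ b) = Gf q"
    using shift0[OF sG] unfolding Gf_def by (simp add: S_b0)
  have "q * ((q + \<rho>) * (\<Sum>b. T 0 (Suc b) * q ^ b)) = q * (q * (1 / (1 - q)) + \<rho> * (1 - q) * (\<Sum>b. S q (Suc b) * q ^ b) + q * Zq)"
    using eq by simp
  then have "(q + \<rho>) * Zq = q * q / (1 - q) + \<rho> * (1 - q) * Gf q + q * q * Zq"
    using z1 g1 by (simp add: algebra_simps)
  then show ?thesis by (simp add: algebra_simps power2_eq_square)
qed

lemma pN_eq: "prob_N \<rho> q n = (1 - \<rho> / (1 - q)) * ((\<rho> / u) * u ^ n + (if n = 0 then 1 - \<rho> / u else 0))"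
proof (cases n)
  case 0 then show ?thesis by (simp add: prob_N_def)
next
  case (Suc m)
  have "\<rho> * u ^ m = \<rho> / u * u ^ Suc m" using u_pos by simp
  then show ?thesis using Suc unfolding prob_N_def u_def by simp
qed

lemma c0_pos: "0 < 1 - \<rho> / (1 - q)" using rq q_lt1 by (simp add: field_simps)

lemma pN_nonneg: "0 \<le> prob_N \<rho> q n"
  unfolding prob_N_def using c0_pos rho_pos q_pos by auto

lemma pB_nonneg: "0 \<le> prob_B q b"
  unfolding prob_B_def using q_pos q_lt1 by auto

lemma mean_eq: "mean_sojourn \<rho> q = (1 - q - \<rho>) / (q * u) * (q * Zq + \<rho> * Kq)"
proof -
  define c0 where "c0 = 1 - \<rho> / (1 - q)"
  let ?f = "\<lambda>n b. T n b * prob_N \<rho> q n * prob_B q b"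
  have nn: "0 \<le> ?f n b" for n b using T_nonneg pN_nonneg pB_nonneg by auto
  have u0: "0 \<le> u" "u < 1" using u_pos u_lt1 by auto
  have inner0: "(\<lambda>n. T n b * prob_N \<rho> q n) sums (c0 * ((\<rho> / u) * S u b + (1 - \<rho> / u) * T 0 b))" for b
  proof -
    have a: "(\<lambda>n. c0 * (\<rho> / u) * (T n b * u ^ n)) sums (c0 * (\<rho> / u) * S u b)"
      unfolding S_def by (intro sums_mult summable_sums sm_T u0)
    have c: "(\<lambda>n. if n = 0 then c0 * (1 - \<rho> / u) * T n b else 0) sums (c0 * (1 - \<rho> / u) * T 0 b)"
      by (rule sums_single)
    have "(\<lambda>n. c0 * (\<rho> / u) * (T n b * u ^ n) + (if n = 0 then c0 * (1 - \<rho> / u) * T n b else 0))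
       sums (c0 * (\<rho> / u) * S u b + c0 * (1 - \<rho> / u) * T 0 b)"
      by (rule sums_add[OF a c])
    moreover have "(\<lambda>n. c0 * (\<rho> / u) * (T n b * u ^ n) + (if n = 0 then c0 * (1 - \<rho> / u) * T n b else 0))
        = (\<lambda>n. T n b * prob_N \<rho> q n)"
    proof
      fix n
      show "c0 * (\<rho> / u) * (T n b * u ^ n) + (if n = 0 then c0 * (1 - \<rho> / u) * T n b else 0) = T n b * prob_N \<rho> q n"
        by (cases "n = 0") (simp_all add: pN_eq[folded c0_def] algebra_simps)
    qed
    ultimately show ?thesis by (simp add: algebra_simps)
  qed
  have inner: "(\<Sum>n. ?f n b) = (1 - q) / q * c0 * ((\<rho> / u) * (S u b * q ^ b) + (1 - \<rho> / u) * (T 0 b * q ^ b))" for b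
  proof -
    have "(\<Sum>n. ?f n b) = (\<Sum>n. T n b * prob_N \<rho> q n) * prob_B q b"
      using suminf_mult2[OF sums_summable[OF inner0[of b]], of "prob_B q b"] by simp
    also have "\<dots> = c0 * ((\<rho> / u) * S u b + (1 - \<rho> / u) * T 0 b) * prob_B q b"
      using inner0[of b] by (simp add: sums_iff)
    also have "\<dots> = (1 - q) / q * c0 * ((\<rho> / u) * (S u b * q ^ b) + (1 - \<rho> / u) * (T 0 b * q ^ b))"
    proof (cases b)
      case 0 then show ?thesis by (simp add: S_b0 T_b0)
    next
      case (Suc m)
      have "prob_B q b = (1 - q) / q * q ^ b" using Suc q_pos by (simp add: prob_B_def)
      then show ?thesis by (simp add: algebra_simps)
    qed
    finally show ?thesis .
  qed
  have sK: "summable (\<lambda>b. S u b * q ^ b)" using sm_S u0 q_pos q_lt1 by auto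
  have sZ: "summable (\<lambda>b. T 0 b * q ^ b)" using sm_T0 q_pos q_lt1 by auto
  have outer: "(\<lambda>b. (1 - q) / q * c0 * ((\<rho> / u) * (S u b * q ^ b) + (1 - \<rho> / u) * (T 0 b * q ^ b)))
      sums ((1 - q) / q * c0 * ((\<rho> / u) * Kq + (1 - \<rho> / u) * Zq))"
    unfolding Kq_def Zq_def by (intro sums_mult sums_add summable_sums sK sZ)
  have s1: "summable (\<lambda>n. ?f n b)" for b
    using summable_mult2[OF sums_summable[OF inner0[of b]], of "prob_B q b"] by simp
  have s2: "summable (\<lambda>b. \<Sum>n. ?f n b)" unfolding inner using outer by (rule sums_summable)
  have "mean_sojourn \<rho> q = (\<Sum>\<^sub>\<infinity>(n, b)\<in>UNIV \<times> {1..}. ?f n b)"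
    unfolding mean_sojourn_def T_def ..
  also have "\<dots> = (\<Sum>b. \<Sum>n. ?f n b)"
    by (rule infsum_pairs_nonneg[OF nn _ s1 s2]) (simp add: T_b0)
  also have "\<dots> = (1 - q) / q * c0 * ((\<rho> / u) * Kq + (1 - \<rho> / u) * Zq)"
    unfolding inner using outer by (simp add: sums_iff)
  also have "\<dots> = (1 - q - \<rho>) / (q * u) * (q * Zq + \<rho> * Kq)"
  proof -
    have m: "(1 - q) * c0 = 1 - q - \<rho>" unfolding c0_def using q_lt1 by (simp add: field_simps)
    have x:  "(\<rho> / u) * Kq + (1 - \<rho> / u) * Zq = (q * Zq + \<rho> * Kq) / u"
    proof -
      have "1 - \<rho> / u = q / u" using u_pos unfolding u_def by (simp add: field_simps)
      moreover have "(\<rho> / u) * Kq + (q / u) * Zq = (q * Zq + \<rho> * Kq) / u"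
        using u_pos by (simp add: field_simps)
      ultimately show ?thesis by simp
    qed
    show ?thesis unfolding x m[symmetric] using q_pos u_pos by (simp add: field_simps)
  qed
  finally show ?thesis .
qed

end

lemma poch_ratio:
  fixes a :: real
  assumes "a > 0"
  shows "pochhammer a k / pochhammer (a + 1) k = a / (a + real k)"
proof -
  have "a * pochhammer (a + 1) k = (a + real k) * pochhammer a k"
    using pochhammer_rec[of a k] pochhammer_rec'[of a k] by simp
  moreover have "pochhammer (a + 1) k > 0" using assms by (intro pochhammer_pos) simp
  moreover have "a + real k > 0" using assms by simp
  ultimately show ?thesis by (simp add: field_simps)
qed

lemma binom_series:
  fixes x b :: real
  assumes "0 \<le> x" "x < 1"
  shows "(\<lambda>k. pochhammer b k / fact k * x ^ k) sums ((1 - x) powr (- b))"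
proof -
  have "(\<lambda>n. ((- b) gchoose n) * (- x) ^ n) sums (1 + - x) powr (- b)"
    by (rule gen_binomial_real) (use assms in auto)
  moreover have "((- b) gchoose n) * (- x) ^ n = pochhammer b n / fact n * x ^ n" for n
  proof -
    have "((- b) gchoose n) * (- x) ^ n = ((-1) ^ n * (-1) ^ n) * (pochhammer b n / fact n * x ^ n)"
      by (simp add: gbinomial_pochhammer power_minus[of x n] algebra_simps)
    also have "(-1::real) ^ n * (-1) ^ n = 1" by (simp add: power_mult_distrib[symmetric])
    finally show ?thesis by simp
  qed
  ultimately show ?thesis by simp
qed

lemma euler_deriv:
  fixes d :: "nat \<Rightarrow> real" and a r v D :: real
  assumes a: "a > 0" and v: "0 < v" "v < r"
    and sd: "\<And>y. 0 \<le> y \<Longrightarrow> y < r \<Longrightarrow> summable (\<lambda>N. \<bar>d N\<bar> * y ^ N)"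
    and Dv: "(\<lambda>N. d N * v ^ N) sums D"
  shows "((\<lambda>x. x powr a * (\<Sum>N. a / (a + real N) * d N * x ^ N)) has_real_derivative
           (a * v powr (a - 1) * D)) (at v)"
proof -
  define e where "e N = a / (a + real N) * d N" for N
  define R where "R = (v + r) / 2"
  have R: "v < R" "R < r" "0 < R" using v unfolding R_def by auto
  have e_le: "\<bar>e N\<bar> \<le> \<bar>d N\<bar>" for N
  proof -
    have h: "\<bar>a / (a + real N)\<bar> \<le> 1" using a by (simp add: abs_of_pos)
    have "\<bar>e N\<bar> = \<bar>a / (a + real N)\<bar> * \<bar>d N\<bar>" unfolding e_def by (simp add: abs_mult)
    also have "\<dots> \<le> 1 * \<bar>d N\<bar>" by (rule mult_right_mono[OF h]) simp
    finally show ?thesis by simp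
  qed
  have se: "summable (\<lambda>N. e N * R ^ N)"
  proof (rule summable_comparison_test'[where N=0])
    show "summable (\<lambda>N. \<bar>d N\<bar> * R ^ N)" using sd R by auto
    fix N show "norm (e N * R ^ N) \<le> \<bar>d N\<bar> * R ^ N"
      using e_le[of N] R by (simp add: abs_mult mult_right_mono)
  qed
  have dP: "((\<lambda>x. \<Sum>N. e N * x ^ N) has_real_derivative (\<Sum>N. diffs e N * v ^ N)) (at v)"
    by (rule termdiffs_strong[OF se]) (use v R in auto)
  have dpow: "((\<lambda>x. x powr a) has_real_derivative a * v powr (a - 1)) (at v)"
    using v by (intro has_real_derivative_powr) auto
  have prod: "((\<lambda>x. x powr a * (\<Sum>N. e N * x ^ N)) has_real_derivative
      (a * v powr (a - 1) * (\<Sum>N. e N * v ^ N) + v powr a * (\<Sum>N. diffs e N * v ^ N))) (at v)"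
    using DERIV_mult[OF dpow dP] by (simp add: algebra_simps)
  have sev: "summable (\<lambda>N. e N * v ^ N)" using powser_inside[OF se, of v] v R by auto
  have sdiff: "summable (\<lambda>N. diffs e N * v ^ N)"
    using termdiff_converges[of v R e] se v R powser_inside[OF se] by auto
  have sNe: "summable (\<lambda>N. (real N * e N) * v ^ N)"
  proof -
    have "summable (\<lambda>N. (real (Suc N) * e (Suc N)) * v ^ N)" using sdiff by (simp add: diffs_def)
    then show ?thesis using summable_powser_split_head[of "\<lambda>N. real N * e N" v] by simp
  qed
  have vdiff: "v * (\<Sum>N. diffs e N * v ^ N) = (\<Sum>N. (real N * e N) * v ^ N)"
  proof -
    have "v * (\<Sum>N. (real (Suc N) * e (Suc N)) * v ^ N) = (\<Sum>N. (real N * e N) * v ^ N) - real 0 * e 0"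
      using powser_split_head(2)[OF sNe] by (simp add: mult.commute)
    then show ?thesis by (simp add: diffs_def)
  qed
  have key: "a * (\<Sum>N. e N * v ^ N) + (\<Sum>N. (real N * e N) * v ^ N) = a * D"
  proof -
    have "a * (\<Sum>N. e N * v ^ N) + (\<Sum>N. (real N * e N) * v ^ N) = (\<Sum>N. a * (e N * v ^ N) + (real N * e N) * v ^ N)"
    proof -
      have "(\<lambda>N. a * (e N * v ^ N) + (real N * e N) * v ^ N) sums (a * (\<Sum>N. e N * v ^ N) + (\<Sum>N. (real N * e N) * v ^ N))"
        by (intro sums_add sums_mult summable_sums sev sNe)
      then show ?thesis by (simp add: sums_iff)
    qed
    also have "\<dots> = (\<Sum>N. a * (d N * v ^ N))"
    proof (rule suminf_cong)
      fix N
      have n0: "a + real N \<noteq> 0" using a by simp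
      have "a * (e N * v ^ N) + (real N * e N) * v ^ N = ((a + real N) * (a / (a + real N))) * (d N * v ^ N)"
        unfolding e_def by (simp add: algebra_simps add_divide_distrib)
      also have "(a + real N) * (a / (a + real N)) = a" using n0 by simp
      finally show "a * (e N * v ^ N) + (real N * e N) * v ^ N = a * (d N * v ^ N)" .
    qed
    also have "\<dots> = a * D" using Dv by (simp add: suminf_mult sums_iff)
    finally show ?thesis .
  qed
  have "a * v powr (a - 1) * (\<Sum>N. e N * v ^ N) + v powr a * (\<Sum>N. diffs e N * v ^ N)
      = v powr (a - 1) * (a * (\<Sum>N. e N * v ^ N) + v * (\<Sum>N. diffs e N * v ^ N))"
  proof -
    have "v powr a = v powr (a - 1) * v" using v by (simp add: powr_diff)
    then show ?thesis by (simp add: algebra_simps)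
  qed
  also have "\<dots> = a * v powr (a - 1) * D" unfolding vdiff key by simp
  finally show ?thesis using prod unfolding e_def by simp
qed


lemma hyp_rep:
  fixes a b z :: real
  assumes "a > 0"
  shows "hyp2F1 a b (a + 1) z = (\<Sum>k. a / (a + real k) * (pochhammer b k / fact k) * z ^ k)"
  unfolding hyp2F1_def
proof (rule suminf_cong)
  fix k
  have "pochhammer a k * pochhammer b k / (pochhammer (a + 1) k * fact k) * z ^ k
      = (pochhammer a k / pochhammer (a + 1) k) * (pochhammer b k / fact k) * z ^ k"
    by simp
  also have "\<dots> = a / (a + real k) * (pochhammer b k / fact k) * z ^ k"
    using poch_ratio[OF assms] by simp
  finally show "pochhammer a k * pochhammer b k / (pochhammer (a + 1) k * fact k) * z ^ k
      = a / (a + real k) * (pochhammer b k / fact k) * z ^ k" .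
qed

lemma hyp_deriv:
  fixes a b z :: real
  assumes "a > 0" "b > 0" "0 < z" "z < 1"
  shows "((\<lambda>x. x powr a * hyp2F1 a b (a + 1) x) has_real_derivative
           (a * z powr (a - 1) * (1 - z) powr (- b))) (at z)"
proof -
  have e: "(\<lambda>x. x powr a * hyp2F1 a b (a + 1) x) =
           (\<lambda>x. x powr a * (\<Sum>k. a / (a + real k) * (pochhammer b k / fact k) * x ^ k))"
    using hyp_rep[OF assms(1)] by simp
  have "((\<lambda>x. x powr a * (\<Sum>k. a / (a + real k) * (pochhammer b k / fact k) * x ^ k)) has_real_derivative
           (a * z powr (a - 1) * (1 - z) powr (- b))) (at z)"
  proof (rule euler_deriv[OF assms(1) assms(3) assms(4)])
    fix y :: real assume y: "0 \<le> y" "y < 1"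
    have "(\<lambda>k. pochhammer b k / fact k * y ^ k) sums ((1 - y) powr (- b))"
      by (rule binom_series[OF y])
    moreover have "(\<lambda>k. \<bar>pochhammer b k / fact k\<bar> * y ^ k) = (\<lambda>k. pochhammer b k / fact k * y ^ k)"
      using pochhammer_nonneg[OF assms(2)] by (intro ext) (simp add: abs_of_nonneg)
    ultimately show "summable (\<lambda>N. \<bar>pochhammer b N / fact N\<bar> * y ^ N)"
      by (simp add: sums_iff)
  next
    show "(\<lambda>N. pochhammer b N / fact N * z ^ N) sums (1 - z) powr - b"
      by (rule binom_series) (use assms in auto)
  qed
  then show ?thesis unfolding e .
qed

definition dA :: "real \<Rightarrow> real \<Rightarrow> nat \<Rightarrow> real" where
  "dA \<beta> w N = (\<Sum>m\<le>N. (pochhammer \<beta> m / fact m * w ^ m) * (pochhammer 2 (N - m) / fact (N - m)))"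

lemma dA_nonneg: "\<beta> > 0 \<Longrightarrow> w \<ge> 0 \<Longrightarrow> dA \<beta> w N \<ge> 0"
  unfolding dA_def
  by (intro sum_nonneg mult_nonneg_nonneg divide_nonneg_pos pochhammer_nonneg) auto

lemma dA_sums:
  fixes \<beta> w v :: real
  assumes "\<beta> > 0" "w \<ge> 0" "0 \<le> v" "w * v < 1" "v < 1"
  shows "(\<lambda>N. dA \<beta> w N * v ^ N) sums ((1 - w * v) powr (- \<beta>) * (1 - v) powr (- 2))"
proof -
  let ?a = "\<lambda>m. pochhammer \<beta> m / fact m * (w * v) ^ m"
  let ?b = "\<lambda>n. pochhammer 2 n / fact n * v ^ n"
  have sa: "?a sums ((1 - w * v) powr (- \<beta>))" by (rule binom_series) (use assms in auto)
  have sb: "?b sums ((1 - v) powr (- 2))" by (rule binom_series) (use assms in auto)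
  have na: "norm (?a m) = ?a m" for m using pochhammer_nonneg[OF assms(1), of m] assms by simp
  have nb: "norm (?b m) = ?b m" for m using pochhammer_nonneg[of "2::real" m] assms by simp
  have "(\<lambda>k. \<Sum>i\<le>k. ?a i * ?b (k - i)) sums (suminf ?a * suminf ?b)"
    by (rule Cauchy_product_sums) (use sa sb na nb in \<open>auto simp: sums_iff\<close>)
  moreover have "(\<Sum>i\<le>k. ?a i * ?b (k - i)) = dA \<beta> w k * v ^ k" for k
    unfolding dA_def sum_distrib_right
  proof (rule sum.cong)
    fix i assume "i \<in> {..k}"
    then have "v ^ i * v ^ (k - i) = v ^ k" by (simp add: power_add[symmetric])
    then show "?a i * ?b (k - i) = pochhammer \<beta> i / fact i * w ^ i * (pochhammer 2 (k - i) / fact (k - i)) * v ^ k"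
      by (simp add: power_mult_distrib algebra_simps)
  qed simp
  ultimately show ?thesis using sa sb by (simp add: sums_iff)
qed

lemma appell_rep:
  fixes \<alpha> \<beta> u v :: real
  assumes a: "\<alpha> > 0" "\<beta> > 0" and u: "0 < u" "u < 1" and v: "0 \<le> v" "v < u"
  shows "appellF1 \<alpha> \<beta> 2 (\<alpha> + 1) (v / u) v = (\<Sum>N. \<alpha> / (\<alpha> + real N) * dA \<beta> (1 / u) N * v ^ N)"
proof -
  define t where "t = (\<lambda>(m, n). pochhammer \<alpha> (m + n) * pochhammer \<beta> m * pochhammer 2 n
          / (pochhammer (\<alpha> + 1) (m + n) * fact m * fact n) * (v / u) ^ m * v ^ n)"
  have t_eq: "t (m, n) = \<alpha> / (\<alpha> + real (m + n)) * ((pochhammer \<beta> m / fact m * (1 / u) ^ m) * (pochhammer 2 n / fact n)) * v ^ (m + n)" for m n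
  proof -
    have "t (m, n) = (pochhammer \<alpha> (m + n) / pochhammer (\<alpha> + 1) (m + n)) * ((pochhammer \<beta> m / fact m * (1 / u) ^ m) * (pochhammer 2 n / fact n)) * v ^ (m + n)"
      unfolding t_def by (simp add: power_add power_divide field_simps)
    then show ?thesis using poch_ratio[OF a(1), of "m + n"] by simp
  qed
  have t_nn: "t x \<ge> 0" for x
  proof -
    obtain m n where x: "x = (m, n)" by fastforce
    show ?thesis unfolding x t_eq using a u v pochhammer_nonneg[OF a(2), of m] pochhammer_nonneg[of 2 n]
      by (intro mult_nonneg_nonneg divide_nonneg_pos) auto
  qed
  let ?g = "\<lambda>(N, m). (m, N - m)"
  have bij: "bij_betw ?g (Sigma UNIV (\<lambda>N. {..N})) (UNIV :: (nat \<times> nat) set)"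
  proof (rule bij_betw_byWitness[where f' = "\<lambda>(m, n). (m + n, m)"])
  qed auto
  have inner: "(\<Sum>m\<le>N. t (m, N - m)) = \<alpha> / (\<alpha> + real N) * dA \<beta> (1 / u) N * v ^ N" for N
    unfolding dA_def sum_distrib_left sum_distrib_right
    by (rule sum.cong) (auto simp: t_eq algebra_simps)
  have wv: "1 / u * v < 1" using u v by (simp add: field_simps)
  have dsum: "(\<lambda>N. dA \<beta> (1 / u) N * v ^ N) sums ((1 - 1 / u * v) powr (- \<beta>) * (1 - v) powr (- 2))"
    by (rule dA_sums) (use a u v wv in auto)
  have outer_s: "summable (\<lambda>N. \<alpha> / (\<alpha> + real N) * dA \<beta> (1 / u) N * v ^ N)"
  proof (rule summable_comparison_test'[where N=0])
    show "summable (\<lambda>N. dA \<beta> (1 / u) N * v ^ N)" using dsum by (simp add: sums_iff)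
    fix N
    have d0: "dA \<beta> (1 / u) N * v ^ N \<ge> 0" using dA_nonneg[OF a(2), of "1/u" N] u v by simp
    have "\<alpha> / (\<alpha> + real N) \<le> 1" "\<alpha> / (\<alpha> + real N) \<ge> 0" using a by auto
    then have "\<alpha> / (\<alpha> + real N) * (dA \<beta> (1 / u) N * v ^ N) \<le> dA \<beta> (1 / u) N * v ^ N"
      "0 \<le> \<alpha> / (\<alpha> + real N) * (dA \<beta> (1 / u) N * v ^ N)"
      using d0 by (auto intro: mult_left_le_one_le simp del: times_divide_eq_left)
    then show "norm (\<alpha> / (\<alpha> + real N) * dA \<beta> (1 / u) N * v ^ N) \<le> dA \<beta> (1 / u) N * v ^ N"
      by (simp only: real_norm_def mult.assoc abs_of_nonneg)
  qed
  have outer_nn: "0 \<le> \<alpha> / (\<alpha> + real N) * dA \<beta> (1 / u) N * v ^ N" for N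
    using dA_nonneg[OF a(2), of "1/u" N] u v a by simp
  have outer_hs: "((\<lambda>N. \<alpha> / (\<alpha> + real N) * dA \<beta> (1 / u) N * v ^ N) has_sum (\<Sum>N. \<alpha> / (\<alpha> + real N) * dA \<beta> (1 / u) N * v ^ N)) UNIV"
  proof (rule norm_summable_imp_has_sum)
    have nf: "(\<lambda>N. norm (\<alpha> / (\<alpha> + real N) * dA \<beta> (1 / u) N * v ^ N)) = (\<lambda>N. \<alpha> / (\<alpha> + real N) * dA \<beta> (1 / u) N * v ^ N)"
      using outer_nn by (intro ext) (simp only: real_norm_def abs_of_nonneg)
    show "summable (\<lambda>N. norm (\<alpha> / (\<alpha> + real N) * dA \<beta> (1 / u) N * v ^ N))" unfolding nf by (rule outer_s)
  qed (rule summable_sums[OF outer_s])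
  have sig: "(\<lambda>(N, m). t (?g (N, m))) summable_on Sigma UNIV (\<lambda>N. {..N})"
  proof (rule summable_on_SigmaI[where g = "\<lambda>N. \<alpha> / (\<alpha> + real N) * dA \<beta> (1 / u) N * v ^ N"])
    fix N :: nat
    show "((\<lambda>m. (\<lambda>(N, m). t (?g (N, m))) (N, m)) has_sum \<alpha> / (\<alpha> + real N) * dA \<beta> (1 / u) N * v ^ N) {..N}"
      using has_sum_finite[of "{..N}" "\<lambda>m. t (m, N - m)"] inner[of N] by simp
  next
    show "(\<lambda>N. \<alpha> / (\<alpha> + real N) * dA \<beta> (1 / u) N * v ^ N) summable_on UNIV"
      using outer_hs by (simp add: has_sum_iff)
  qed (use t_nn in auto)
  have "appellF1 \<alpha> \<beta> 2 (\<alpha> + 1) (v / u) v = infsum t UNIV"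
    unfolding appellF1_def t_def by simp
  also have "\<dots> = (\<Sum>\<^sub>\<infinity>x\<in>Sigma UNIV (\<lambda>N. {..N}). t (?g x))"
    by (rule infsum_reindex_bij_betw[OF bij, symmetric])
  also have "\<dots> = (\<Sum>\<^sub>\<infinity>(N, m)\<in>Sigma UNIV (\<lambda>N. {..N}). t (?g (N, m)))"
    by (rule infsum_cong) auto
  also have "\<dots> = (\<Sum>\<^sub>\<infinity>N\<in>UNIV. \<Sum>\<^sub>\<infinity>m\<in>{..N}. t (?g (N, m)))"
    using infsum_Sigma'_banach[of "\<lambda>N m. t (?g (N, m))", OF sig] by simp
  also have "\<dots> = (\<Sum>\<^sub>\<infinity>N\<in>UNIV. \<alpha> / (\<alpha> + real N) * dA \<beta> (1 / u) N * v ^ N)"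
    by (rule infsum_cong) (simp add: infsum_finite inner)
  also have "\<dots> = (\<Sum>N. \<alpha> / (\<alpha> + real N) * dA \<beta> (1 / u) N * v ^ N)"
    using outer_hs by (simp add: has_sum_iff)
  finally show ?thesis .
qed

lemma appell_deriv:
  fixes \<alpha> \<beta> u v :: real
  assumes a: "\<alpha> > 0" "\<beta> > 0" and u: "0 < u" "u < 1" and v: "0 < v" "v < u"
  shows "((\<lambda>x. x powr \<alpha> * appellF1 \<alpha> \<beta> 2 (\<alpha> + 1) (x / u) x) has_real_derivative
           (\<alpha> * v powr (\<alpha> - 1) * ((1 - v / u) powr (- \<beta>) * (1 - v) powr (- 2)))) (at v)"
proof -
  have d: "((\<lambda>x. x powr \<alpha> * (\<Sum>N. \<alpha> / (\<alpha> + real N) * dA \<beta> (1 / u) N * x ^ N)) has_real_derivative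
           (\<alpha> * v powr (\<alpha> - 1) * ((1 - 1 / u * v) powr (- \<beta>) * (1 - v) powr (- 2)))) (at v)"
  proof (rule euler_deriv[OF a(1) v(1) v(2)])
    fix y :: real assume y: "0 \<le> y" "y < u"
    have "(\<lambda>N. dA \<beta> (1 / u) N * y ^ N) sums ((1 - 1 / u * y) powr (- \<beta>) * (1 - y) powr (- 2))"
      by (rule dA_sums) (use a u y in \<open>auto simp: field_simps\<close>)
    moreover have "(\<lambda>N. \<bar>dA \<beta> (1 / u) N\<bar> * y ^ N) = (\<lambda>N. dA \<beta> (1 / u) N * y ^ N)"
      using dA_nonneg[OF a(2), of "1/u"] u by (intro ext) (simp add: abs_of_nonneg)
    ultimately show "summable (\<lambda>N. \<bar>dA \<beta> (1 / u) N\<bar> * y ^ N)" by (simp add: sums_iff)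
  next
    show "(\<lambda>N. dA \<beta> (1 / u) N * v ^ N) sums ((1 - 1 / u * v) powr (- \<beta>) * (1 - v) powr (- 2))"
      by (rule dA_sums) (use a u v in \<open>auto simp: field_simps\<close>)
  qed
  have "((\<lambda>x. x powr \<alpha> * appellF1 \<alpha> \<beta> 2 (\<alpha> + 1) (x / u) x) has_real_derivative
           (\<alpha> * v powr (\<alpha> - 1) * ((1 - 1 / u * v) powr (- \<beta>) * (1 - v) powr (- 2)))) (at v)"
  proof (rule has_field_derivative_transform_within_open[OF d, of "{0<..<u}"])
    fix x :: real assume "x \<in> {0<..<u}"
    then show "x powr \<alpha> * (\<Sum>N. \<alpha> / (\<alpha> + real N) * dA \<beta> (1 / u) N * x ^ N) = x powr \<alpha> * appellF1 \<alpha> \<beta> 2 (\<alpha> + 1) (x / u) x"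
      using appell_rep[OF a u, of x] by simp
  qed (use v in auto)
  then show ?thesis by simp
qed

lemma pw_deriv:
  fixes f :: "nat \<Rightarrow> real"
  assumes sf: "summable (\<lambda>n. f n * R ^ n)" and v: "0 < v" "v < R"
  shows "((\<lambda>x. \<Sum>n. f n * x ^ n) has_real_derivative (\<Sum>n. (real n * f n) * v ^ n) / v) (at v)"
    and "summable (\<lambda>n. (real n * f n) * v ^ n)"
proof -
  have d: "((\<lambda>x. \<Sum>n. f n * x ^ n) has_real_derivative (\<Sum>n. diffs f n * v ^ n)) (at v)"
    by (rule termdiffs_strong[OF sf]) (use v in auto)
  have sdiff: "summable (\<lambda>N. diffs f N * v ^ N)"
    using termdiff_converges[of v R f] sf v powser_inside[OF sf] by auto
  show sNe: "summable (\<lambda>N. (real N * f N) * v ^ N)"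
  proof -
    have "summable (\<lambda>N. (real (Suc N) * f (Suc N)) * v ^ N)" using sdiff by (simp add: diffs_def)
    then show ?thesis using summable_powser_split_head[of "\<lambda>N. real N * f N" v] by simp
  qed
  have vdiff: "v * (\<Sum>N. diffs f N * v ^ N) = (\<Sum>N. (real N * f N) * v ^ N)"
  proof -
    have "v * (\<Sum>N. (real (Suc N) * f (Suc N)) * v ^ N) = (\<Sum>N. (real N * f N) * v ^ N) - real 0 * f 0"
      using powser_split_head(2)[OF sNe] by (simp add: mult.commute)
    then show ?thesis by (simp add: diffs_def)
  qed
  have "(\<Sum>n. diffs f n * v ^ n) = (\<Sum>n. (real n * f n) * v ^ n) / v"
    using vdiff v by (simp add: field_simps)
  then show "((\<lambda>x. \<Sum>n. f n * x ^ n) has_real_derivative (\<Sum>n. (real n * f n) * v ^ n) / v) (at v)"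
    using d by simp
qed

context pq begin

definition c where "c = (1 - q - \<rho>) / \<rho>"
definition Aa where "Aa = u / (1 - u)^2"
definition Bb where "Bb = 1 / (1 - u)"

lemma c_pos: "0 < c" using rq rho_pos by (simp add: c_def)
lemma c_rho: "c * \<rho> = 1 - q - \<rho>" using rho_pos by (simp add: c_def)

definition Kf where "Kf v = (\<Sum>b. S u b * v ^ b)"
definition DK where "DK v = (\<Sum>b. (real b * S u b) * v ^ b)"
definition DG where "DG v = (\<Sum>b. (real b * S q b) * v ^ b)"

lemma S_lin:
  assumes "0 \<le> x" "x < 1"
  shows "\<bar>real b * S x b\<bar> \<le> (kap * (x / (1 - x)^2 + 1 / (1 - x))) * (real b + 1)^2"
proof -
  have c0: "0 \<le> x / (1 - x)^2" "0 \<le> 1 / (1 - x)" using assms by auto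
  have "S x b \<le> kap * (x / (1 - x)^2 + real b / (1 - x))" by (rule S_le[OF assms])
  also have "\<dots> \<le> kap * ((x / (1 - x)^2 + 1 / (1 - x)) * (real b + 1))"
  proof (intro mult_left_mono)
    have a: "real b / (1 - x) \<le> (real b + 1) * (1 / (1 - x))"
      using c0 by (simp add: divide_right_mono)
    have b': "x / (1 - x)^2 \<le> (real b + 1) * (x / (1 - x)^2)"
      using mult_right_mono[of 1 "real b + 1" "x / (1 - x)^2"] c0 by simp
    show "x / (1 - x)^2 + real b / (1 - x) \<le> (x / (1 - x)^2 + 1 / (1 - x)) * (real b + 1)"
      using a b' by (simp add: algebra_simps)
  qed (use kap_pos in auto)
  finally have s: "S x b \<le> kap * ((x / (1 - x)^2 + 1 / (1 - x)) * (real b + 1))" .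
  have "real b * S x b \<le> (real b + 1) * (kap * ((x / (1 - x)^2 + 1 / (1 - x)) * (real b + 1)))"
    using s S_nonneg[OF assms, of b] kap_pos c0 by (intro mult_mono) auto
  also have "(real b + 1) * (kap * ((x / (1 - x)^2 + 1 / (1 - x)) * (real b + 1))) = (kap * (x / (1 - x)^2 + 1 / (1 - x))) * (real b + 1)^2"
    by (simp add: power2_eq_square)
  finally have h: "real b * S x b \<le> (kap * (x / (1 - x)^2 + 1 / (1 - x))) * (real b + 1)^2" .
  have "0 \<le> real b * S x b" using S_nonneg[OF assms, of b] by simp
  then show ?thesis using h by simp
qed

lemma sm_bS: "0 \<le> x \<Longrightarrow> x < 1 \<Longrightarrow> 0 \<le> v \<Longrightarrow> v < 1 \<Longrightarrow> summable (\<lambda>b. (real b * S x b) * v ^ b)"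
  by (rule summable_quad_bound[OF S_lin])

lemma coef_id:
  "u * (real b + c) * S u b - real b * S u (b - 1)
     = (if b = 0 then 0 else Aa + Bb * real b) + (1 - q) * (u / \<rho> - real b) * S q b"
proof (cases "b = 0")
  case True then show ?thesis by (simp add: S_b0)
next
  case False
  then have "b \<ge> 1" by simp
  note r = R1[OF this]
  have "\<rho> * (u * (real b + c) * S u b - real b * S u (b - 1))
     = \<rho> * ((Aa + Bb * real b) + (1 - q) * (u / \<rho> - real b) * S q b)"
  proof -
    have "\<rho> * (u * (real b + c) * S u b) = u * (\<rho> * real b + c * \<rho>) * S u b"
      by (simp add: algebra_simps)
    then have "\<rho> * (u * (real b + c) * S u b) = u * (\<rho> * real b + 1 - q - \<rho>) * S u b"
      unfolding c_rho by (simp add: algebra_simps)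
    moreover have "\<rho> * ((1 - q) * (u / \<rho> - real b) * S q b) = (1 - q) * (u - \<rho> * real b) * S q b"
      using rho_pos by (simp add: field_simps)
    ultimately show ?thesis using r unfolding Aa_def Bb_def by (simp add: algebra_simps)
  qed
  then show ?thesis using False rho_pos by simp
qed

lemma ode:
  assumes "0 \<le> v" "v < 1"
  shows "(u - v) * DK v + (c * u - v) * Kf v = Aa * v / (1 - v) + Bb * v / (1 - v)^2 + (1 - q) * (u / \<rho> * Gf v - DG v)"
proof -
  have u0: "0 \<le> u" "u < 1" using u_pos u_lt1 by auto
  have q0: "0 \<le> q" "q < 1" using q_pos q_lt1 by auto
  have sK: "summable (\<lambda>b. S u b * v ^ b)" using sm_S u0 assms by auto
  have sDK: "summable (\<lambda>b. (real b * S u b) * v ^ b)" using sm_bS u0 assms by auto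
  have sG: "summable (\<lambda>b. S q b * v ^ b)" using sm_S q0 assms by auto
  have sDG: "summable (\<lambda>b. (real b * S q b) * v ^ b)" using sm_bS q0 assms by auto
  let ?h = "\<lambda>b. (real b * S u (b - 1)) * v ^ b"
  have h1: "(\<lambda>n. ?h (Suc n)) = (\<lambda>n. v * ((real n * S u n) * v ^ n + S u n * v ^ n))"
    by (auto simp: algebra_simps)
  have sh1: "summable (\<lambda>n. ?h (Suc n))" unfolding h1
    by (intro summable_mult summable_add sDK sK)
  have sh: "summable ?h" by (rule iffD1[OF summable_Suc_iff sh1])
  have vh: "(\<Sum>n. ?h n) = v * (DK v + Kf v)"
  proof -
    have "(\<Sum>n. ?h n) = (\<Sum>n. ?h (Suc n))" using suminf_split_head[OF sh] by simp
    also have "\<dots> = v * (DK v + Kf v)"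
      unfolding h1 DK_def Kf_def using suminf_mult[OF summable_add[OF sDK sK], of v] suminf_add[OF sDK sK] by simp
    finally show ?thesis .
  qed
  have geo: "(\<lambda>b. (Aa + Bb * real b) * v ^ b) sums (Aa / (1 - v) + Bb * v / (1 - v)^2)"
    by (rule sum_lin_geom) (use assms in auto)
  have src: "(\<lambda>b. (if b = 0 then 0 else Aa + Bb * real b) * v ^ b) sums (Aa * v / (1 - v) + Bb * v / (1 - v)^2)"
  proof -
    have "(\<lambda>b. (Aa + Bb * real b) * v ^ b - (if b = 0 then Aa else 0)) sums (Aa / (1 - v) + Bb * v / (1 - v)^2 - Aa)"
      by (rule sums_diff[OF geo sums_single])
    moreover have "(\<lambda>b. (Aa + Bb * real b) * v ^ b - (if b = 0 then Aa else 0)) = (\<lambda>b. (if b = 0 then 0 else Aa + Bb * real b) * v ^ b)"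
      by auto
    moreover have "Aa / (1 - v) + Bb * v / (1 - v)^2 - Aa = Aa * v / (1 - v) + Bb * v / (1 - v)^2"
    proof -
      have "1 - v \<noteq> 0" using assms by auto
      then have "Aa / (1 - v) - Aa = Aa * v / (1 - v)" by (simp add: field_simps)
      then show ?thesis by simp
    qed
    ultimately show ?thesis by simp
  qed
  have L: "(\<lambda>b. (u * (real b + c) * S u b - real b * S u (b - 1)) * v ^ b) sums (u * DK v + u * c * Kf v - v * (DK v + Kf v))"
  proof -
    have "(\<lambda>b. u * ((real b * S u b) * v ^ b) + u * c * (S u b * v ^ b) - ?h b) sums (u * DK v + u * c * Kf v - (\<Sum>n. ?h n))"
      unfolding DK_def Kf_def by (intro sums_diff sums_add sums_mult summable_sums sDK sK sh)
    moreover have "(\<lambda>b. u * ((real b * S u b) * v ^ b) + u * c * (S u b * v ^ b) - ?h b) = (\<lambda>b. (u * (real b + c) * S u b - real b * S u (b - 1)) * v ^ b)"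
      by (auto simp: algebra_simps)
    ultimately show ?thesis unfolding vh by simp
  qed
  have R: "(\<lambda>b. ((if b = 0 then 0 else Aa + Bb * real b) + (1 - q) * (u / \<rho> - real b) * S q b) * v ^ b)
     sums (Aa * v / (1 - v) + Bb * v / (1 - v)^2 + (1 - q) * (u / \<rho> * Gf v - DG v))"
  proof -
    have "(\<lambda>b. (if b = 0 then 0 else Aa + Bb * real b) * v ^ b + (1 - q) * (u / \<rho> * (S q b * v ^ b) - (real b * S q b) * v ^ b))
       sums (Aa * v / (1 - v) + Bb * v / (1 - v)^2 + (1 - q) * (u / \<rho> * Gf v - DG v))"
      unfolding Gf_def DG_def by (intro sums_add sums_mult sums_diff src summable_sums sG sDG)
    moreover have "(\<lambda>b. (if b = 0 then 0 else Aa + Bb * real b) * v ^ b + (1 - q) * (u / \<rho> * (S q b * v ^ b) - (real b * S q b) * v ^ b))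
       = (\<lambda>b. ((if b = 0 then 0 else Aa + Bb * real b) + (1 - q) * (u / \<rho> - real b) * S q b) * v ^ b)"
      by (auto simp: algebra_simps)
    ultimately show ?thesis by simp
  qed
  have "u * DK v + u * c * Kf v - v * (DK v + Kf v) = Aa * v / (1 - v) + Bb * v / (1 - v)^2 + (1 - q) * (u / \<rho> * Gf v - DG v)"
    using sums_unique2[OF L[unfolded coef_id] R] .
  then show ?thesis by (simp add: algebra_simps)
qed


definition kp where "kp = \<rho> * c / u"

lemma kp_pos: "0 < kp" using rho_pos c_pos u_pos by (simp add: kp_def)

lemma one_minus_z:
  assumes "v < 1"
  shows "1 - kp * (v / (1 - v)) = (u - v) / (u * (1 - v))"
proof -
  have h: "u + \<rho> * c = 1" using c_rho by (simp add: u_def algebra_simps)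
  have "1 - kp * (v / (1 - v)) = (u * (1 - v) - \<rho> * c * v) / (u * (1 - v))"
    unfolding kp_def using assms u_pos by (simp add: field_simps)
  also have "u * (1 - v) - \<rho> * c * v = u - v * (u + \<rho> * c)" by (simp add: algebra_simps)
  also have "\<dots> = u - v" using h by simp
  finally show ?thesis .
qed

definition Mb where "Mb v = (v / (1 - v)) powr (c + 1) * hyp2F1 (c + 1) c (c + 1 + 1) (kp * (v / (1 - v)))"
definition Ma where "Ma v = v powr (c + 2) * appellF1 (c + 2) c 2 (c + 2 + 1) (v / u) v"

lemma Mb_deriv:
  assumes v: "0 < v" "v < u"
  shows "(Mb has_real_derivative ((c + 1) * u powr c * v powr c / ((u - v) powr c * (1 - v)^2))) (at v)"
proof -
  have v1: "v < 1" using v u_lt1 by simp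
  define H where "H z = z powr (c + 1) * hyp2F1 (c + 1) c (c + 1 + 1) z" for z
  define z where "z x = kp * (x / (1 - x))" for x
  have zv: "0 < z v" "z v < 1"
  proof -
    show "0 < z v" unfolding z_def using kp_pos v v1 by simp
    have "1 - z v = (u - v) / (u * (1 - v))" unfolding z_def by (rule one_minus_z[OF v1])
    moreover have "(u - v) / (u * (1 - v)) > 0" using v v1 u_pos by simp
    ultimately show "z v < 1" by simp
  qed
  have dH: "(H has_real_derivative ((c + 1) * z v powr (c + 1 - 1) * (1 - z v) powr (- c))) (at (z v))"
    unfolding H_def by (rule hyp_deriv) (use c_pos zv in auto)
  have dz: "(z has_real_derivative kp / (1 - v)^2) (at v)"
  proof -
    have "((\<lambda>x. x / (1 - x)) has_real_derivative (1 * (1 - v) - v * (0 - 1)) / ((1 - v) * (1 - v))) (at v)"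
      by (intro DERIV_divide DERIV_ident DERIV_diff DERIV_const) (use v1 in auto)
    then have "((\<lambda>x. kp * (x / (1 - x))) has_real_derivative kp * ((1 * (1 - v) - v * (0 - 1)) / ((1 - v) * (1 - v)))) (at v)"
      by (rule DERIV_cmult)
    then show ?thesis unfolding z_def by (simp add: power2_eq_square)
  qed
  have dcomp: "((\<lambda>x. kp powr (- (c + 1)) * H (z x)) has_real_derivative
      kp powr (- (c + 1)) * (((c + 1) * z v powr (c + 1 - 1) * (1 - z v) powr (- c)) * (kp / (1 - v)^2))) (at v)"
    by (intro DERIV_cmult DERIV_chain2[OF dH dz])
  have eqf: "kp powr (- (c + 1)) * H (z x) = Mb x" if "x \<in> {0<..<1}" for x
  proof -
    have x: "0 < x" "x < 1" using that by auto
    have "(kp * (x / (1 - x))) powr (c + 1) = kp powr (c + 1) * (x / (1 - x)) powr (c + 1)"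
      by (rule powr_mult)
    moreover have "kp powr (- (c + 1)) * kp powr (c + 1) = 1"
    proof -
      have "kp powr (- (c + 1)) = inverse (kp powr (c + 1))" by (rule powr_minus)
      moreover have "kp powr (c + 1) > 0" using kp_pos by simp
      ultimately show ?thesis by simp
    qed
    ultimately show ?thesis unfolding H_def z_def Mb_def by (simp add: mult.assoc[symmetric])
  qed
  have dMb: "(Mb has_real_derivative
      kp powr (- (c + 1)) * (((c + 1) * z v powr (c + 1 - 1) * (1 - z v) powr (- c)) * (kp / (1 - v)^2))) (at v)"
    by (rule has_field_derivative_transform_within_open[OF dcomp, of "{0<..<1}"]) (use eqf v v1 in auto)
  have val: "kp powr (- (c + 1)) * (((c + 1) * z v powr (c + 1 - 1) * (1 - z v) powr (- c)) * (kp / (1 - v)^2))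
     = (c + 1) * u powr c * v powr c / ((u - v) powr c * (1 - v)^2)"
  proof -
    have w: "0 < 1 - v" "0 < u - v" using v v1 by auto
    have e1: "z v powr (c + 1 - 1) = kp powr c * (v powr c / (1 - v) powr c)"
      unfolding z_def by (simp add: powr_mult powr_divide)
    have e2: "(1 - z v) powr (- c) = u powr c * (1 - v) powr c / (u - v) powr c"
      unfolding z_def one_minus_z[OF v1] by (simp add: powr_minus powr_divide powr_mult)
    have e3: "kp powr (- (c + 1)) = 1 / (kp powr c * kp)"
    proof -
      have "kp powr (- (c + 1)) = inverse (kp powr (c + 1))" by (rule powr_minus)
      also have "kp powr (c + 1) = kp powr c * kp powr 1" by (rule powr_add)
      finally show ?thesis using kp_pos by (simp add: divide_inverse)
    qed
    have p: "0 < kp powr c" "0 < (1 - v) powr c" "0 < (u - v) powr c" using kp_pos w by auto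
    show ?thesis unfolding e1 e2 e3 using p kp_pos w by (simp add: field_simps)
  qed
  show ?thesis using dMb unfolding val .
qed

lemma Ma_deriv:
  assumes v: "0 < v" "v < u"
  shows "(Ma has_real_derivative ((c + 2) * u powr c * v powr c * v / ((u - v) powr c * (1 - v)^2))) (at v)"
proof -
  have v1: "v < 1" using v u_lt1 by simp
  have d: "((\<lambda>x. x powr (c + 2) * appellF1 (c + 2) c 2 (c + 2 + 1) (x / u) x) has_real_derivative
           ((c + 2) * v powr (c + 2 - 1) * ((1 - v / u) powr (- c) * (1 - v) powr (- 2)))) (at v)"
    by (rule appell_deriv) (use c_pos u_pos u_lt1 v in auto)
  have val: "(c + 2) * v powr (c + 2 - 1) * ((1 - v / u) powr (- c) * (1 - v) powr (- 2))
      = (c + 2) * u powr c * v powr c * v / ((u - v) powr c * (1 - v)^2)"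
  proof -
    have w: "0 < 1 - v" "0 < u - v" using v v1 by auto
    have e1: "v powr (c + 2 - 1) = v powr c * v"
    proof -
      have "v powr (c + 2 - 1) = v powr (c + 1)" by (simp add: algebra_simps)
      also have "\<dots> = v powr c * v powr 1" by (rule powr_add)
      finally show ?thesis using v by simp
    qed
    have e2: "(1 - v / u) powr (- c) = u powr c / (u - v) powr c"
    proof -
      have "1 - v / u = (u - v) / u" using u_pos by (simp add: field_simps)
      then show ?thesis by (simp add: powr_minus powr_divide)
    qed
    have e3: "(1 - v) powr (- 2) = 1 / (1 - v)^2"
      using w by (simp add: powr_minus powr_numeral divide_inverse)
    have p: "0 < (u - v) powr c" using w by auto
    show ?thesis unfolding e1 e2 e3 using p w by (simp add: field_simps)
  qed
  show ?thesis using d unfolding val Ma_def[abs_def] .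
qed

end

context pq begin

lemma dvc: "0 < v \<Longrightarrow> ((\<lambda>x. x powr c) has_real_derivative c * (v powr c / v)) (at v)"
proof -
  assume v: "0 < v"
  have "v powr (c - 1) = v powr c / v" using v by (simp add: powr_diff)
  then show ?thesis using has_real_derivative_powr[OF v, of c] by simp
qed

lemma dwc: "v < u \<Longrightarrow> ((\<lambda>x. (u - x) powr c) has_real_derivative - c * ((u - v) powr c / (u - v))) (at v)"
proof -
  assume v: "v < u"
  have g: "((\<lambda>x. u - x) has_real_derivative (0 - 1)) (at v)" by (intro DERIV_diff DERIV_const DERIV_ident)
  have f: "((\<lambda>x. c) has_real_derivative 0) (at v)" by (rule DERIV_const)
  have "((\<lambda>x. (u - x) powr c) has_real_derivative (u - v) powr c * (0 * ln (u - v) + (0 - 1) * c / (u - v))) (at v)"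
    using DERIV_powr[OF g _ f] v by simp
  then show ?thesis by (simp add: field_simps)
qed

lemma dP1:
  assumes v: "0 < v" "v < u"
  shows "((\<lambda>x. x powr c * (u - x) / (u - x) powr c) has_real_derivative
           v powr c / ((u - v) powr c * v) * (c * u - v)) (at v)"
proof -
  have wc: "0 < (u - v) powr c" using v by simp
  have d1: "((\<lambda>x. x powr c * (u - x)) has_real_derivative c * (v powr c / v) * (u - v) + v powr c * (0 - 1)) (at v)"
    using DERIV_mult[OF dvc[OF v(1)] DERIV_diff[OF DERIV_const DERIV_ident, of u v]] by (simp add: algebra_simps)
  have d2: "((\<lambda>x. x powr c * (u - x) / (u - x) powr c) has_real_derivative
      ((c * (v powr c / v) * (u - v) + v powr c * (0 - 1)) * (u - v) powr c - v powr c * (u - v) * (- c * ((u - v) powr c / (u - v)))) / ((u - v) powr c * (u - v) powr c)) (at v)"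
    by (rule DERIV_divide[OF d1 dwc[OF v(2)]]) (use wc in auto)
  have "((c * (v powr c / v) * (u - v) + v powr c * (0 - 1)) * (u - v) powr c - v powr c * (u - v) * (- c * ((u - v) powr c / (u - v)))) / ((u - v) powr c * (u - v) powr c)
      = v powr c / ((u - v) powr c * v) * (c * u - v)"
    using v wc by (simp add: field_simps; simp add: algebra_simps)
  then show ?thesis using d2 by simp
qed

lemma dP2:
  assumes v: "0 < v" "v < u"
  shows "((\<lambda>x. x powr c / (u - x) powr c) has_real_derivative
           c * u * v powr c / (v * (u - v) powr c * (u - v))) (at v)"
proof -
  have wc: "0 < (u - v) powr c" using v by simp
  have d2: "((\<lambda>x. x powr c / (u - x) powr c) has_real_derivative
      (c * (v powr c / v) * (u - v) powr c - v powr c * (- c * ((u - v) powr c / (u - v)))) / ((u - v) powr c * (u - v) powr c)) (at v)"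
    by (rule DERIV_divide[OF dvc[OF v(1)] dwc[OF v(2)]]) (use wc in auto)
  have "(c * (v powr c / v) * (u - v) powr c - v powr c * (- c * ((u - v) powr c / (u - v)))) / ((u - v) powr c * (u - v) powr c)
      = c * u * v powr c / (v * (u - v) powr c * (u - v))"
    using v wc by (simp add: field_simps; simp add: algebra_simps)
  then show ?thesis using d2 by simp
qed

lemma dKf:
  assumes "0 < v" "v < 1"
  shows "(Kf has_real_derivative DK v / v) (at v)"
proof -
  define R where "R = (v + 1) / 2"
  have R: "v < R" "R < 1" "0 \<le> R" using assms unfolding R_def by auto
  have "summable (\<lambda>b. S u b * R ^ b)" using sm_S u_pos u_lt1 R by auto
  from pw_deriv(1)[OF this assms(1) R(1)] show ?thesis unfolding Kf_def[abs_def] DK_def .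
qed

lemma dGf:
  assumes "0 < v" "v < 1"
  shows "(Gf has_real_derivative DG v / v) (at v)"
proof -
  define R where "R = (v + 1) / 2"
  have R: "v < R" "R < 1" "0 \<le> R" using assms unfolding R_def by auto
  have "summable (\<lambda>b. S q b * R ^ b)" using sm_S q_pos q_lt1 R by auto
  from pw_deriv(1)[OF this assms(1) R(1)] show ?thesis unfolding Gf_def[abs_def] DG_def .
qed

definition Psi where
  "Psi v = v powr c * (u - v) / (u - v) powr c * Kf v + (1 - q) * (v powr c / (u - v) powr c) * Gf v
         - (Aa + Bb) / ((c + 1) * u powr c) * Mb v + Aa / ((c + 2) * u powr c) * Ma v"

definition integrand where
  "integrand \<xi> = (1 - \<xi>) * \<xi> powr ((1 - 2 * \<rho> - q) / \<rho>)
                   * (\<rho> + q - \<xi>) powr (- (1 - q) / \<rho>) * E1 \<rho> q \<xi>"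

lemma integrand_eq:
  assumes v: "0 < v" "v < u" "v < 1"
  shows "integrand v = (1 - v) * (v powr c / v) * (1 / ((u - v) powr c * (u - v))) * (- Gf v)"
proof -
  have e1: "(1 - 2 * \<rho> - q) / \<rho> = c - 1" unfolding c_def using rho_pos by (simp add: field_simps)
  have e2: "- (1 - q) / \<rho> = - (c + 1)" unfolding c_def using rho_pos by (simp add: field_simps)
  have p1: "v powr (c - 1) = v powr c / v" using v by (simp add: powr_diff)
  have p2: "(u - v) powr (- (c + 1)) = 1 / ((u - v) powr c * (u - v))"
  proof -
    have "(u - v) powr (- (c + 1)) = inverse ((u - v) powr (c + 1))" by (rule powr_minus)
    also have "(u - v) powr (c + 1) = (u - v) powr c * (u - v) powr 1" by (rule powr_add)
    finally show ?thesis using v by (simp add: divide_inverse)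
  qed
  have E: "E1 \<rho> q v = - Gf v" unfolding Gf_def using E1_eq[of v] v by simp
  show ?thesis unfolding integrand_def e1 e2 p1 E p2[unfolded u_def] unfolding u_def by simp
qed

lemma Psi_deriv:
  assumes v: "0 < v" "v < u"
  shows "(Psi has_real_derivative (- (1 - q) * u / \<rho> * integrand v)) (at v)"
proof -
  have v1: "v < 1" using v u_lt1 by simp
  have wc: "0 < (u - v) powr c" using v by simp
  have vc: "0 < v powr c" using v by simp
  define P1 where "P1 x = x powr c * (u - x) / (u - x) powr c" for x
  define P2 where "P2 x = x powr c / (u - x) powr c" for x
  define al where "al = (Aa + Bb) / ((c + 1) * u powr c)"
  define be where "be = Aa / ((c + 2) * u powr c)"
  have PsiE: "Psi = (\<lambda>x. P1 x * Kf x + (1 - q) * (P2 x * Gf x) - al * Mb x + be * Ma x)"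
    unfolding Psi_def[abs_def] P1_def P2_def al_def be_def by (simp add: mult.assoc)
  have d: "(Psi has_real_derivative
     (v powr c / ((u - v) powr c * v) * (c * u - v) * Kf v + DK v / v * P1 v)
     + (1 - q) * (c * u * v powr c / (v * (u - v) powr c * (u - v)) * Gf v + DG v / v * P2 v)
     - al * ((c + 1) * u powr c * v powr c / ((u - v) powr c * (1 - v)^2))
     + be * ((c + 2) * u powr c * v powr c * v / ((u - v) powr c * (1 - v)^2))) (at v)"
    unfolding PsiE
    by (intro DERIV_add DERIV_diff DERIV_cmult DERIV_mult[OF dP1[OF v, folded P1_def] dKf[OF v(1) v1]]
        DERIV_mult[OF dP2[OF v, folded P2_def] dGf[OF v(1) v1]] Mb_deriv[OF v] Ma_deriv[OF v])
  define X where "X = v powr c / ((u - v) powr c * v)"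
  have Xp: "X > 0" unfolding X_def using vc wc v by simp
  have uv: "0 < u - v" "0 < 1 - v" using v v1 by auto
  have h1: "v powr c / ((u - v) powr c * v) * (c * u - v) * Kf v + DK v / v * P1 v = X * ((c * u - v) * Kf v + (u - v) * DK v)"
    unfolding X_def P1_def using v wc by (simp add: field_simps)
  have h2: "(1 - q) * (c * u * v powr c / (v * (u - v) powr c * (u - v)) * Gf v + DG v / v * P2 v)
      = X * ((1 - q) * (c * u / (u - v) * Gf v + DG v))"
    unfolding X_def P2_def using v wc uv by (simp add: field_simps)
  have h3: "be * ((c + 2) * u powr c * v powr c * v / ((u - v) powr c * (1 - v)^2))
     - al * ((c + 1) * u powr c * v powr c / ((u - v) powr c * (1 - v)^2))
     = X * (- v * (Aa + Bb - Aa * v) / (1 - v)^2)"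
  proof -
    have up: "0 < u powr c" using u_pos by simp
    have ale: "al * ((c + 1) * u powr c) = Aa + Bb" unfolding al_def using up c_pos by simp
    have bee: "be * ((c + 2) * u powr c) = Aa" unfolding be_def using up c_pos by simp
    define Y where "Y = v powr c / ((u - v) powr c * (1 - v)^2)"
    have a1: "al * ((c + 1) * u powr c * v powr c / ((u - v) powr c * (1 - v)^2)) = (al * ((c + 1) * u powr c)) * Y"
      unfolding Y_def by simp
    have a2: "be * ((c + 2) * u powr c * v powr c * v / ((u - v) powr c * (1 - v)^2)) = (be * ((c + 2) * u powr c)) * v * Y"
      unfolding Y_def by simp
    have xv: "X * v = v powr c / (u - v) powr c" unfolding X_def using v by simp
    have "X * (- v * (Aa + Bb - Aa * v) / (1 - v)^2) = - (X * v) * (Aa + Bb - Aa * v) / (1 - v)^2"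
      by (simp add: algebra_simps)
    also have "\<dots> = Y * (- (Aa + Bb) + Aa * v)"
      unfolding xv Y_def using uv wc by (simp add: field_simps)
    finally have "X * (- v * (Aa + Bb - Aa * v) / (1 - v)^2) = Y * (- (Aa + Bb) + Aa * v)" .
    then show ?thesis unfolding a1 a2 ale bee by (simp add: algebra_simps)
  qed
  have ode_v: "(c * u - v) * Kf v + (u - v) * DK v = Aa * v / (1 - v) + Bb * v / (1 - v)^2 + (1 - q) * (u / \<rho> * Gf v - DG v)"
    using ode[of v] v v1 by (simp add: algebra_simps)
  have h4: "Aa * v / (1 - v) + Bb * v / (1 - v)^2 - v * (Aa + Bb - Aa * v) / (1 - v)^2 = 0"
  proof -
    have e: "Aa * v / (1 - v) = (Aa * v * (1 - v)) / (1 - v)^2" using uv by (simp add: power2_eq_square)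
    have "Aa * v / (1 - v) + Bb * v / (1 - v)^2 - v * (Aa + Bb - Aa * v) / (1 - v)^2
        = (Aa * v * (1 - v) + Bb * v - v * (Aa + Bb - Aa * v)) / (1 - v)^2"
      unfolding e by (simp add: add_divide_distrib diff_divide_distrib)
    also have "Aa * v * (1 - v) + Bb * v - v * (Aa + Bb - Aa * v) = 0" by (simp add: algebra_simps)
    finally show ?thesis by simp
  qed
  have h5: "u / \<rho> + c * u / (u - v) = u * (1 - v) / (\<rho> * (u - v))"
  proof -
    have h: "u + \<rho> * c = 1" using c_rho by (simp add: u_def algebra_simps)
    have "u * u + \<rho> * (u * c) = u * (u + \<rho> * c)" by (simp add: algebra_simps)
    then have hh: "u * u + \<rho> * (u * c) = u" using h by simp
    show ?thesis using uv rho_pos hh by (simp add: field_simps)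
  qed
  define A1 where "A1 = v powr c / ((u - v) powr c * v) * (c * u - v) * Kf v + DK v / v * P1 v"
  define A2 where "A2 = (1 - q) * (c * u * v powr c / (v * (u - v) powr c * (u - v)) * Gf v + DG v / v * P2 v)"
  define A3 where "A3 = be * ((c + 2) * u powr c * v powr c * v / ((u - v) powr c * (1 - v)^2))
     - al * ((c + 1) * u powr c * v powr c / ((u - v) powr c * (1 - v)^2))"
  have "(v powr c / ((u - v) powr c * v) * (c * u - v) * Kf v + DK v / v * P1 v)
     + (1 - q) * (c * u * v powr c / (v * (u - v) powr c * (u - v)) * Gf v + DG v / v * P2 v)
     - al * ((c + 1) * u powr c * v powr c / ((u - v) powr c * (1 - v)^2))
     + be * ((c + 2) * u powr c * v powr c * v / ((u - v) powr c * (1 - v)^2))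
     = A1 + A2 + A3" unfolding A1_def A2_def A3_def by linarith
  also have "\<dots> = X * ((c * u - v) * Kf v + (u - v) * DK v) + X * ((1 - q) * (c * u / (u - v) * Gf v + DG v))
     + X * (- v * (Aa + Bb - Aa * v) / (1 - v)^2)"
    unfolding A1_def A2_def A3_def h1 h2 h3 ..
  also have "\<dots> = X * (((c * u - v) * Kf v + (u - v) * DK v) + (1 - q) * (c * u / (u - v) * Gf v + DG v)
            - v * (Aa + Bb - Aa * v) / (1 - v)^2)"
  proof -
    define Fv where "Fv = v * (Aa + Bb - Aa * v) / (1 - v)^2"
    define Gq where "Gq = c * u / (u - v)"
    have "- v * (Aa + Bb - Aa * v) / (1 - v)^2 = - Fv" unfolding Fv_def by simp
    moreover have "\<And>a b. X * a + X * ((1 - q) * (Gq * Gf v + DG v)) + X * (- Fv) = X * (a + (1 - q) * (Gq * Gf v + DG v) - Fv)"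
      by (simp add: algebra_simps)
    ultimately show ?thesis unfolding Fv_def[symmetric] Gq_def[symmetric] by simp
  qed
  also have "\<dots> = X * ((Aa * v / (1 - v) + Bb * v / (1 - v)^2 - v * (Aa + Bb - Aa * v) / (1 - v)^2)
            + (1 - q) * Gf v * (u / \<rho> + c * u / (u - v)))"
  proof -
    have gen: "\<And>H W1 W2 Fv.
       X * ((H + (1 - q) * (W1 * Gf v - DG v)) + (1 - q) * (W2 * Gf v + DG v) - Fv) = X * ((H - Fv) + (1 - q) * Gf v * (W1 + W2))"
      by (simp add: algebra_simps)
    show ?thesis unfolding ode_v by (rule gen)
  qed
  also have "\<dots> = X * ((1 - q) * Gf v * (u * (1 - v) / (\<rho> * (u - v))))"
    unfolding h4 h5 by simp
  also have "\<dots> = - (1 - q) * u / \<rho> * integrand v"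
    unfolding integrand_eq[OF v v1] X_def using v wc uv rho_pos by (simp add: field_simps)
  finally show ?thesis using d by simp
qed

end

lemma euler_summ:
  fixes d :: "nat \<Rightarrow> real" and a r K :: real
  assumes a: "a > 0" and sd: "\<And>y. 0 \<le> y \<Longrightarrow> y < r \<Longrightarrow> summable (\<lambda>N. \<bar>d N\<bar> * y ^ N)"
    and K: "0 \<le> K" "K < r"
  shows "summable (\<lambda>N. a / (a + real N) * d N * K ^ N)"
proof (rule summable_comparison_test'[where N=0])
  show "summable (\<lambda>N. \<bar>d N\<bar> * K ^ N)" using sd K by auto
  fix N
  have h: "\<bar>a / (a + real N)\<bar> \<le> 1" using a by (simp add: abs_of_pos)
  have "norm (a / (a + real N) * d N * K ^ N) = \<bar>a / (a + real N)\<bar> * (\<bar>d N\<bar> * K ^ N)"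
    using K by (simp add: abs_mult)
  also have "\<dots> \<le> 1 * (\<bar>d N\<bar> * K ^ N)" by (rule mult_right_mono[OF h]) (use K in simp)
  finally show "norm (a / (a + real N) * d N * K ^ N) \<le> \<bar>d N\<bar> * K ^ N" by simp
qed

context pq begin

definition PB where "PB z = (\<Sum>k. (c + 1) / (c + 1 + real k) * (pochhammer c k / fact k) * z ^ k)"
definition PA where "PA x = (\<Sum>N. (c + 2) / (c + 2 + real N) * dA c (1 / u) N * x ^ N)"

lemma Mb_alt: "Mb v = (v / (1 - v)) powr (c + 1) * PB (kp * (v / (1 - v)))"
  unfolding Mb_def PB_def using hyp_rep[of "c + 1" c] c_pos by simp

lemma Ma_alt: "0 \<le> v \<Longrightarrow> v < u \<Longrightarrow> Ma v = v powr (c + 2) * PA v"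
  unfolding Ma_def PA_def using appell_rep[of "c + 2" c u v] c_pos u_pos u_lt1 by simp

lemma sd_B: "0 \<le> y \<Longrightarrow> y < 1 \<Longrightarrow> summable (\<lambda>k. \<bar>pochhammer c k / fact k\<bar> * y ^ k)"
proof -
  assume y: "0 \<le> y" "y < 1"
  have "(\<lambda>k. pochhammer c k / fact k * y ^ k) sums ((1 - y) powr (- c))" by (rule binom_series[OF y])
  moreover have "(\<lambda>k. \<bar>pochhammer c k / fact k\<bar> * y ^ k) = (\<lambda>k. pochhammer c k / fact k * y ^ k)"
    using pochhammer_nonneg[OF c_pos] by (intro ext) (simp add: abs_of_nonneg)
  ultimately show ?thesis by (simp add: sums_iff)
qed

lemma sd_A: "0 \<le> y \<Longrightarrow> y < u \<Longrightarrow> summable (\<lambda>N. \<bar>dA c (1 / u) N\<bar> * y ^ N)"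
proof -
  assume y: "0 \<le> y" "y < u"
  have "(\<lambda>N. dA c (1 / u) N * y ^ N) sums ((1 - 1 / u * y) powr (- c) * (1 - y) powr (- 2))"
    by (rule dA_sums) (use c_pos u_pos u_lt1 y in \<open>auto simp: field_simps\<close>)
  moreover have "(\<lambda>N. \<bar>dA c (1 / u) N\<bar> * y ^ N) = (\<lambda>N. dA c (1 / u) N * y ^ N)"
    using dA_nonneg[OF c_pos, of "1/u"] u_pos by (intro ext) (simp add: abs_of_nonneg)
  ultimately show ?thesis by (simp add: sums_iff)
qed

lemma zq_lt1: "kp * (q / (1 - q)) < 1"
proof -
  have "1 - kp * (q / (1 - q)) = (u - q) / (u * (1 - q))" by (rule one_minus_z[OF q_lt1])
  moreover have "(u - q) / (u * (1 - q)) > 0" using q_lt_u u_pos q_lt1 by simp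
  ultimately show ?thesis by simp
qed

lemma cont_Psi: "continuous_on {0..q} Psi"
proof -
  have q1: "q < 1" and qu: "q < u" using q_lt1 q_lt_u by auto
  have c1: "continuous_on {0..q} (\<lambda>v. v powr c)"
    by (rule continuous_on_powr') (use c_pos in \<open>auto intro: continuous_intros\<close>)
  have c2: "continuous_on {0..q} (\<lambda>v. (u - v) powr c)"
    by (rule continuous_on_powr) (use qu in \<open>auto intro: continuous_intros\<close>)
  have nz: "\<forall>v\<in>{0..q}. (u - v) powr c \<noteq> 0" using qu by auto
  define R where "R = (q + 1) / 2"
  have R: "q < R" "R < 1" "0 \<le> R" using q_pos q_lt1 unfolding R_def by auto
  have cK: "continuous_on {0..q} Kf"
  proof (intro continuous_at_imp_continuous_on ballI)
    fix x assume x: "x \<in> {0..q}"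
    have "summable (\<lambda>b. S u b * R ^ b)" using sm_S u_pos u_lt1 R by auto
    then show "isCont Kf x" unfolding Kf_def[abs_def] by (rule isCont_powser) (use x R in auto)
  qed
  have cG: "continuous_on {0..q} Gf"
  proof (intro continuous_at_imp_continuous_on ballI)
    fix x assume x: "x \<in> {0..q}"
    have "summable (\<lambda>b. S q b * R ^ b)" using sm_S q_pos q_lt1 R by auto
    then show "isCont Gf x" unfolding Gf_def[abs_def] by (rule isCont_powser) (use x R in auto)
  qed
  have cMb: "continuous_on {0..q} Mb"
  proof -
    have cw: "continuous_on {0..q} (\<lambda>v. (v / (1 - v)) powr (c + 1))"
      by (rule continuous_on_powr') (use q1 c_pos in \<open>auto intro!: continuous_intros\<close>)
    define K where "K = (kp * (q / (1 - q)) + 1) / 2"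
    have hl: "\<And>z::real. z < 1 \<Longrightarrow> z < (z + 1) / 2 \<and> (z + 1) / 2 < 1" by auto
    have K: "kp * (q / (1 - q)) < K" "K < 1" using hl[OF zq_lt1] unfolding K_def by auto
    have cP: "continuous_on {0..q} (\<lambda>v. PB (kp * (v / (1 - v))))"
    proof (intro continuous_at_imp_continuous_on ballI)
      fix x assume x: "x \<in> {0..q}"
      have x1: "x < 1" using x q1 by auto
      have f: "isCont (\<lambda>v. kp * (v / (1 - v))) x" using x1 by (intro continuous_intros) auto
      have zx: "0 \<le> kp * (x / (1 - x))" "kp * (x / (1 - x)) \<le> kp * (q / (1 - q))"
        using x x1 q1 kp_pos by (auto intro!: mult_left_mono frac_le)
      have s: "summable (\<lambda>k. (c + 1) / (c + 1 + real k) * (pochhammer c k / fact k) * K ^ k)"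
        using euler_summ[where d="\<lambda>k. pochhammer c k / fact k" and a="c + 1" and r=1 and K=K] c_pos sd_B K zx by auto
      show "isCont (\<lambda>v. PB (kp * (v / (1 - v)))) x"
      proof -
        have n1: "norm (kp * (x / (1 - x))) = kp * (x / (1 - x))" using zx(1) by (simp only: real_norm_def abs_of_nonneg)
        have "0 < K" using zx K by linarith
        then have n2: "norm K = K" by simp
        have "norm (kp * (x / (1 - x))) < norm K" unfolding n1 n2 using zx K by linarith
        then show ?thesis unfolding PB_def by (rule isCont_powser'[OF f s])
      qed
    qed
    show ?thesis unfolding Mb_alt[abs_def] by (intro continuous_on_mult cw cP)
  qed
  have cMa: "continuous_on {0..q} Ma"
  proof -
    have "continuous_on {0..q} (\<lambda>v. v powr (c + 2) * PA v)"
    proof (intro continuous_on_mult)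
      show "continuous_on {0..q} (\<lambda>v. v powr (c + 2))"
        by (rule continuous_on_powr') (use c_pos in \<open>auto intro: continuous_intros\<close>)
      define K where "K = (q + u) / 2"
      have K: "q < K" "K < u" "0 \<le> K" using qu q_pos unfolding K_def by auto
      show "continuous_on {0..q} PA"
      proof (intro continuous_at_imp_continuous_on ballI)
        fix x assume x: "x \<in> {0..q}"
        have s: "summable (\<lambda>N. (c + 2) / (c + 2 + real N) * dA c (1 / u) N * K ^ N)"
          using euler_summ[where d="dA c (1 / u)" and a="c + 2" and r=u and K=K] c_pos sd_A K by auto
        show "isCont PA x" unfolding PA_def[abs_def] by (rule isCont_powser[OF s]) (use x K in auto)
      qed
    qed
    moreover have eq: "\<And>v. v \<in> {0..q} \<Longrightarrow> v powr (c + 2) * PA v = Ma v"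
      using Ma_alt qu by auto
    ultimately show ?thesis using continuous_on_cong[OF refl, of "{0..q}" "\<lambda>v. v powr (c + 2) * PA v" Ma] eq by blast
  qed
  have cd: "continuous_on {0..q} (\<lambda>v. u - v)" by (rule continuous_on_diff[OF continuous_on_const continuous_on_id])
  have t1: "continuous_on {0..q} (\<lambda>v. v powr c * (u - v) / (u - v) powr c * Kf v)"
    by (rule continuous_on_mult[OF continuous_on_divide[OF continuous_on_mult[OF c1 cd] c2 nz] cK])
  have t2: "continuous_on {0..q} (\<lambda>v. (1 - q) * (v powr c / (u - v) powr c) * Gf v)"
    by (rule continuous_on_mult[OF continuous_on_mult[OF continuous_on_const continuous_on_divide[OF c1 c2 nz]] cG])
  have t3: "continuous_on {0..q} (\<lambda>v. (Aa + Bb) / ((c + 1) * u powr c) * Mb v)"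
    by (rule continuous_on_mult[OF continuous_on_const cMb])
  have t4: "continuous_on {0..q} (\<lambda>v. Aa / ((c + 2) * u powr c) * Ma v)"
    by (rule continuous_on_mult[OF continuous_on_const cMa])
  show ?thesis unfolding Psi_def[abs_def]
    by (rule continuous_on_add[OF continuous_on_diff[OF continuous_on_add[OF t1 t2] t3] t4])
qed

lemma Psi0: "Psi 0 = 0"
  unfolding Psi_def Mb_def Ma_def using c_pos by simp

lemma integral_val:
  "integral {0..q} integrand = - \<rho> / ((1 - q) * u) * Psi q"
proof -
  have ftc: "((\<lambda>x. - (1 - q) * u / \<rho> * integrand x) has_integral Psi q - Psi 0) {0..q}"
  proof (rule fundamental_theorem_of_calculus_interior)
    show "0 \<le> q" using q_pos by simp
    show "continuous_on {0..q} Psi" by (rule cont_Psi)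
    fix x assume "x \<in> {0<..<q}"
    then have x: "0 < x" "x < u" using q_lt_u by auto
    show "(Psi has_vector_derivative - (1 - q) * u / \<rho> * integrand x) (at x)"
      using Psi_deriv[OF x] by (simp add: has_real_derivative_iff_has_vector_derivative)
  qed
  have k: "- (1 - q) * u / \<rho> \<noteq> 0" using q_lt1 u_pos rho_pos by simp
  have "((\<lambda>x. (- \<rho> / ((1 - q) * u)) * (- (1 - q) * u / \<rho> * integrand x)) has_integral
          (- \<rho> / ((1 - q) * u)) * (Psi q - Psi 0)) {0..q}"
    by (rule has_integral_mult_right[OF ftc])
  moreover have "(\<lambda>x. (- \<rho> / ((1 - q) * u)) * (- (1 - q) * u / \<rho> * integrand x)) = integrand"
    using q_lt1 u_pos rho_pos by (intro ext) (simp add: field_simps)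
  ultimately have "(integrand has_integral (- \<rho> / ((1 - q) * u)) * (Psi q - Psi 0)) {0..q}" by simp
  then show ?thesis using Psi0 by (simp add: integral_unique)
qed

end

lemma alg:
  fixes \<rho> q c u d e f Q Rr U W AF HF K G Aa Bb :: real
  assumes pos: "0 < \<rho>" "0 < Q" "0 < Rr" "0 < U" "0 < W" "d \<noteq> 0" "e \<noteq> 0" "f \<noteq> 0" "u \<noteq> 0"
    and ee: "1 - q = e" and dd: "e - \<rho> = d" and ff: "e + \<rho> = f" and uu: "q + \<rho> = u"
    and c1: "c + 1 = e / \<rho>" and c2: "c + 2 = f / \<rho>" and AB: "Aa + Bb = 1 / d^2" and A: "Aa = u / d^2"
  shows "\<rho> * K = (1 - q) * (- G) - \<rho>^2 * (q / (1 - q - \<rho>)^2 * (Rr / U * (u / \<rho>))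
     * (q / (1 - q + \<rho>) * AF - 1 / (W * (1 - q)) / ((1 - q) * (q + \<rho>)) * HF)
     + (- (1 / Q) * (Rr / \<rho>) / \<rho> * (Q * \<rho> / Rr * K + (1 - q) * (Q / Rr) * G
        - (Aa + Bb) / ((c + 1) * U) * (Q * q / (W * (1 - q)) * HF) + Aa / ((c + 2) * U) * (Q * q^2 * AF))))"
proof -
  have r1: "(Aa + Bb) / ((c + 1) * U) = \<rho> / (d^2 * e * U)" unfolding AB c1 using pos by (simp add: field_simps)
  have r2: "Aa / ((c + 2) * U) = \<rho> * u / (d^2 * f * U)" unfolding A c2 using pos by (simp add: field_simps)
  show ?thesis unfolding r1 r2 ee dd ff uu using pos by (simp add: field_simps) (simp add: power2_eq_square algebra_simps)
qed

lemma alg2: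
  fixes \<rho> q K Z E w D :: real
  assumes D: "D = \<rho> + q - q^2" "D \<noteq> 0" and q: "0 < q" "q < 1" and r: "0 < \<rho>"
    and hK: "\<rho> * K = (1 - q) * E - w" and hZ: "D * Z = q^2 / (1 - q) + \<rho> * (1 - q) * (- E)"
  shows "(1 - q - \<rho>) / (q * (\<rho> + q)) * (q * Z + \<rho> * K) =
         (1 - \<rho> - q) / (q * (q + \<rho>)) * ((1 - q)^2 * (\<rho> + q) / (\<rho> + q - q^2) * E
              + q^3 / ((1 - q) * (\<rho> + q - q^2)) - w)"
proof -
  have q1: "1 - q \<noteq> 0" using q by simp
  have Zv: "Z = (q^2 / (1 - q) + \<rho> * (1 - q) * (- E)) / D" using hZ D(2) by (simp add: field_simps)
  have inner: "q * Z + \<rho> * K = (1 - q)^2 * (\<rho> + q) / D * E + q^3 / ((1 - q) * D) - w"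
  proof -
    have "q * Z + \<rho> * K = (q^3 / (1 - q) - q * \<rho> * (1 - q) * E + (1 - q) * E * D) / D - w"
      unfolding Zv hK using D(2) by (simp add: field_simps power3_eq_cube power2_eq_square)
    also have "q^3 / (1 - q) - q * \<rho> * (1 - q) * E + (1 - q) * E * D = q^3 / (1 - q) + (1 - q)^2 * (\<rho> + q) * E"
      unfolding D(1) by (simp add: algebra_simps power2_eq_square)
    also have "(q^3 / (1 - q) + (1 - q)^2 * (\<rho> + q) * E) / D - w = (1 - q)^2 * (\<rho> + q) / D * E + q^3 / ((1 - q) * D) - w"
      using D(2) q1 by (simp add: field_simps)
    finally show ?thesis .
  qed
  show ?thesis unfolding inner D(1)[symmetric] by (simp add: algebra_simps)
qed

context pq begin

lemma Omega2_val: "Omega2 \<rho> q q = - (1 / q powr c) * (\<rho> powr c / \<rho>) / \<rho> * Psi q"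
proof -
  have e1: "(\<rho> + q - 1) / \<rho> = - c" unfolding c_def using rho_pos by (simp add: field_simps)
  have e2: "- (2 * \<rho> + q - 1) / \<rho> = c - 1" unfolding c_def using rho_pos by (simp add: field_simps)
  have p1: "q powr (- c) = 1 / q powr c" by (simp add: powr_minus divide_inverse)
  have p2: "\<rho> powr (c - 1) = \<rho> powr c / \<rho>" using rho_pos by (simp add: powr_diff)
  have "Omega2 \<rho> q q = (1 - q) * (\<rho> + q) / \<rho>^2 * q powr ((\<rho> + q - 1) / \<rho>)
       * (\<rho> + q - q) powr (- (2 * \<rho> + q - 1) / \<rho>) * integral {0..q} integrand"
    unfolding Omega2_def integrand_def[abs_def] ..
  also have "\<dots> = (1 - q) * u / \<rho>^2 * (1 / q powr c) * (\<rho> powr c / \<rho>) * (- \<rho> / ((1 - q) * u) * Psi q)"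
  proof -
    have e3: "\<rho> + q - q = \<rho>" by simp
    show ?thesis unfolding e1 e2 e3 p1 p2 integral_val by (simp add: u_def)
  qed
  also have "\<dots> = - (1 / q powr c) * (\<rho> powr c / \<rho>) / \<rho> * Psi q"
  proof -
    have "0 < q powr c" using q_pos by simp
    then show ?thesis using q_lt1 u_pos rho_pos by (simp add: field_simps power2_eq_square)
  qed
  finally show ?thesis .
qed

lemma Psi_q: "Psi q = q powr c * \<rho> / \<rho> powr c * Kq + (1 - q) * (q powr c / \<rho> powr c) * Gf q
         - (Aa + Bb) / ((c + 1) * u powr c) * Mb q + Aa / ((c + 2) * u powr c) * Ma q"
  unfolding Psi_def Kf_def Kq_def by (simp add: u_def)

definition AF where "AF = appellF1 (c + 2) c 2 (c + 2 + 1) (q / u) q"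
definition HF where "HF = hyp2F1 (c + 1) c (c + 1 + 1) (kp * (q / (1 - q)))"

lemma Ma_q: "Ma q = q powr c * q^2 * AF"
proof -
  have "q powr (c + 2) = q powr c * q powr 2" by (rule powr_add)
  also have "q powr 2 = q^2" using q_pos by (simp add: powr_numeral)
  finally show ?thesis unfolding Ma_def AF_def by simp
qed

lemma Mb_q: "Mb q = q powr c * q / ((1 - q) powr c * (1 - q)) * HF"
proof -
  have "(q / (1 - q)) powr (c + 1) = (q / (1 - q)) powr c * (q / (1 - q)) powr 1" by (rule powr_add)
  also have "\<dots> = q powr c / (1 - q) powr c * (q / (1 - q))" using q_pos q_lt1 by (simp add: powr_divide)
  finally show ?thesis unfolding Mb_def HF_def by simp
qed

lemma Omega1_val:
  "Omega1 \<rho> q q = q / (1 - q + \<rho>) * AF - 1 / ((1 - q) powr c * (1 - q)) / ((1 - q) * (q + \<rho>)) * HF"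
proof -
  have a1: "(1 - q + \<rho>) / \<rho> = c + 2" unfolding c_def using rho_pos by (simp add: field_simps)
  have a2: "(1 - q - \<rho>) / \<rho> = c" unfolding c_def ..
  have a3: "(1 - q + 2 * \<rho>) / \<rho> = c + 2 + 1" unfolding c_def using rho_pos by (simp add: field_simps)
  have a4: "q / (q + \<rho>) = q / u" by (simp add: u_def)
  have b1: "(1 - q) / \<rho> = c + 1" unfolding c_def using rho_pos by (simp add: field_simps)
  have b3: "hyp2F1 (c + 1) c (c + 2) = hyp2F1 (c + 1) c (c + 1 + 1)" by (simp add: add.assoc)
  have b4: "q * (1 - q - \<rho>) / ((1 - q) * (q + \<rho>)) = kp * (q / (1 - q))"
  proof -
    have "kp * (q / (1 - q)) = (c * \<rho>) * q / (u * (1 - q))" unfolding kp_def by (simp add: mult.commute)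
    also have "\<dots> = q * (1 - q - \<rho>) / ((1 - q) * (q + \<rho>))" unfolding c_rho by (simp add: u_def algebra_simps)
    finally show ?thesis by simp
  qed
  have b5: "(1 - q) powr ((q - 1) / \<rho>) = 1 / ((1 - q) powr c * (1 - q))"
  proof -
    have "(q - 1) / \<rho> = - (c + 1)" unfolding c_def using rho_pos by (simp add: field_simps)
    then have "(1 - q) powr ((q - 1) / \<rho>) = (1 - q) powr (- (c + 1))" by simp
    also have "\<dots> = inverse ((1 - q) powr (c + 1))" by (rule powr_minus)
    also have "(1 - q) powr (c + 1) = (1 - q) powr c * (1 - q) powr 1" by (rule powr_add)
    finally show ?thesis using q_lt1 by (simp add: divide_inverse)
  qed
  show ?thesis unfolding Omega1_def a1 a2 a3 a4 b1 b3 b4 b5 AF_def HF_def ..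
qed


lemma key: "\<rho> * Kq = (1 - q) * E1 \<rho> q q - omega \<rho> q"
proof -
  have E1q: "E1 \<rho> q q = - Gf q" unfolding Gf_def using E1_eq[of q] q_pos q_lt1 by simp
  have pw: "(\<rho> / (\<rho> + q)) powr ((1 - q - 2 * \<rho>) / \<rho>) = \<rho> powr c / u powr c * (u / \<rho>)"
  proof -
    have e: "(1 - q - 2 * \<rho>) / \<rho> = c - 1" unfolding c_def using rho_pos by (simp add: field_simps)
    have "(\<rho> / u) powr (c - 1) = (\<rho> / u) powr c / (\<rho> / u) powr 1" by (rule powr_diff)
    also have "\<dots> = \<rho> powr c / u powr c * (u / \<rho>)" using rho_pos u_pos by (simp add: powr_divide)
    finally show ?thesis unfolding e by (simp add: u_def)
  qed
  have c1: "c + 1 = (1 - q) / \<rho>" and c2: "c + 2 = (1 - q + \<rho>) / \<rho>"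
    unfolding c_def using rho_pos by (simp_all add: field_simps)
  have AB: "Aa + Bb = 1 / (1 - q - \<rho>)^2"
  proof -
    have n: "1 - u \<noteq> 0" using u_lt1 by simp
    have e: "1 / (1 - u) = (1 - u) / (1 - u)^2" using n by (simp add: power2_eq_square)
    have "Aa + Bb = (u + (1 - u)) / (1 - u)^2" unfolding Aa_def Bb_def e by (simp only: add_divide_distrib)
    also have "\<dots> = 1 / (1 - q - \<rho>)^2" unfolding u_def by (simp add: algebra_simps)
    finally show ?thesis .
  qed
  have A: "Aa = u / (1 - q - \<rho>)^2" unfolding Aa_def u_def by (simp add: algebra_simps)
  have main: "\<rho> * Kq = (1 - q) * (- Gf q) - \<rho>^2 * (q / (1 - q - \<rho>)^2 * (\<rho> powr c / u powr c * (u / \<rho>))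
     * (q / (1 - q + \<rho>) * AF - 1 / ((1 - q) powr c * (1 - q)) / ((1 - q) * (q + \<rho>)) * HF)
     + (- (1 / q powr c) * (\<rho> powr c / \<rho>) / \<rho> * (q powr c * \<rho> / \<rho> powr c * Kq + (1 - q) * (q powr c / \<rho> powr c) * Gf q
        - (Aa + Bb) / ((c + 1) * u powr c) * (q powr c * q / ((1 - q) powr c * (1 - q)) * HF) + Aa / ((c + 2) * u powr c) * (q powr c * q^2 * AF))))"
    by (rule alg[where d = "1 - q - \<rho>" and e = "1 - q" and f = "1 - q + \<rho>"])
       (use rho_pos q_pos q_lt1 rq u_pos c1 c2 AB A in \<open>auto simp: u_def\<close>)
  show ?thesis unfolding omega_def pw Omega1_val Omega2_val Psi_q Mb_q Ma_q E1q using main by simp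
qed

end

theorem mainTheorem2:
  fixes \<rho> q :: real
  assumes "0 < \<rho>" and "0 < q" and "q < 1" and "\<rho> + q < 1"
  shows "mean_sojourn \<rho> q =
           (1 - \<rho> - q) / (q * (q + \<rho>)) *
             ((1 - q)^2 * (\<rho> + q) / (\<rho> + q - q^2) * E1 \<rho> q q
              + q^3 / ((1 - q) * (\<rho> + q - q^2))
              - omega \<rho> q)"
proof -
  interpret pq \<rho> q using assms by unfold_locales
  have E1q: "E1 \<rho> q q = - Gf q" unfolding Gf_def using E1_eq[of q] assms by simp
  have D: "\<rho> + q - q^2 \<noteq> 0"
  proof -
    have "q^2 < q" using assms by (simp add: power2_eq_square)
    then show ?thesis using assms by simp
  qed
  have hZ: "(\<rho> + q - q^2) * Zq = q^2 / (1 - q) + \<rho> * (1 - q) * (- E1 \<rho> q q)"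
    using Z_eq unfolding E1q by (simp add: algebra_simps)
  have "mean_sojourn \<rho> q = (1 - q - \<rho>) / (q * (\<rho> + q)) * (q * Zq + \<rho> * Kq)"
    using mean_eq by (simp add: u_def)
  also have "\<dots> = (1 - \<rho> - q) / (q * (q + \<rho>)) * ((1 - q)^2 * (\<rho> + q) / (\<rho> + q - q^2) * E1 \<rho> q q
              + q^3 / ((1 - q) * (\<rho> + q - q^2)) - omega \<rho> q)"
    by (rule alg2[OF refl D _ _ _ key hZ]) (use assms in auto)
  finally show ?thesis .
qed

end
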